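(* For every $\mu\in\mathbb{P}_{\textup{cost}}^{\textup{AC}}(\mathcal{X})$ and every bounded continuous $\phi:\mathcal{Y}\to\mathbb{R}$, $$\inf_{\nu\in\mathbb{P}_{\textup{cost}}(\mathcal{Y})}\Big(\int_{\mathcal{Y}}\phi\,\mathrm{d}\nu+K_c(\mu,\nu)\Big)=\int_{\mathcal{X}}(-\phi)^c\,\mathrm{d}\mu,$$ where $(-\phi)^c(x)=\inf_{y\in\mathcal{Y}}(c(x,y)+\phi(y))$. Moreover the infimum is attained at $\bar\nu=(T_{(-\phi)^c})_\#\mu$.
   Context: Standing assumptions. $\mathcal{X},\mathcal{Y}\subset\mathbb{R}^d$ are open sets and $c:\mathcal{X}\times\mathcal{Y}\to[0,\infty)$ satisfies: (A1) $c\in C^2(\mathcal{X}\times\mathcal{Y})$ and $c$ is bi-twisted, i.e. $y\mapsto\nabla_x c(x,y)$ and $x\mapsto\nabla_y c(x,y)$ are injective; (A2) for every $b\in\mathbb{R}$ and $(x',y')\in\mathcal{X}\times\mathcal{Y}$ the sets $\{x\in\mathcal{X}:c(x,y')\le b\}$ and $\{y\in\mathcal{Y}:c(x',y)\le b\}$ are compact; (A3) there is a point $(x_0,y_0)\in\mathcal{X}\times\mathcal{Y}$ such that for every $\varepsilon>0$ there is $B_\varepsilon>0$ with $(1-\varepsilon)c(x_0,y)-B_\varepsilon c(x,y_0)\le c(x,y)\le(1+\varepsilon)c(x_0,y)+B_\varepsilon c(x,y_0)$ and $(1-\varepsilon)c(x,y_0)-B_\varepsilon c(x_0,y)\le c(x,y)\le(1+\varepsilon)c(x,y_0)+B_\varepsilon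 c(x_0,y)$ for all $(x,y)\in\mathcal{X}\times\mathcal{Y}$. Define $\mathbb{P}_{\textup{cost}}(\mathcal{X})=\{\mu\in\mathcal{P}(\mathcal{X}):\int c(x,y_0)\,\mathrm{d}\mu(x)<\infty\}$ and $\mathbb{P}_{\textup{cost}}(\mathcal{Y})=\{\nu\in\mathcal{P}(\mathcal{Y}):\int c(x_0,y)\,\mathrm{d}\nu(y)<\infty\}$; a superscript AC denotes the subset of measures absolutely continuous w.r.t. Lebesgue measure. $K_c(\mu,\nu)=\inf_{\pi\in\Pi(\mu,\nu)}\int c\,\mathrm{d}\pi$. For $f:\mathcal{Y}\to\mathbb{R}$, $f^c(x)=\inf_{y}(c(x,y)-f(y))$; for $g:\mathcal{X}\to\mathbb{R}$, $g^c(y)=\inf_x(c(x,y)-g(x))$; a function is $c$-concave if it equals its double $c$-transform. For a $c$-concave $g:\mathcal{X}\to\mathbb{R}$, $T_g$ denotes the map defined at points $x$ of differentiability of $g$ (hence a.e.) by $\nabla_xc(x,T_g(x))=\nabla g(x)$, which is well defined by the twist condition. *)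

theory Defs
  imports "HOL-Analysis.Analysis" "HOL-Probability.Probability"
begin

definition C2_on :: "'b::euclidean_space set \<Rightarrow> ('b \<Rightarrow> real) \<Rightarrow> bool" where
  "C2_on S f \<longleftrightarrow> (\<exists>(D :: 'b \<Rightarrow> ('b \<Rightarrow>\<^sub>L real)) (D2 :: 'b \<Rightarrow> ('b \<Rightarrow>\<^sub>L ('b \<Rightarrow>\<^sub>L real))).
      (\<forall>p\<in>S. (f has_derivative blinfun_apply (D p)) (at p)) \<and>
      (\<forall>p\<in>S. (D has_derivative blinfun_apply (D2 p)) (at p)) \<and>
      continuous_on S D2)"

text \<open>Gradients are represented by Frechet derivatives (linear functionals).\<close>
definition grad_x :: "('a::euclidean_space \<Rightarrow> 'a \<Rightarrow> real) \<Rightarrow> 'a \<Rightarrow> 'a \<Rightarrow> ('a \<Rightarrow> real)" where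
  "grad_x c x y = frechet_derivative (\<lambda>x'. c x' y) (at x)"

definition grad_y :: "('a::euclidean_space \<Rightarrow> 'a \<Rightarrow> real) \<Rightarrow> 'a \<Rightarrow> 'a \<Rightarrow> ('a \<Rightarrow> real)" where
  "grad_y c x y = frechet_derivative (\<lambda>y'. c x y') (at y)"

definition cost_assms :: "'a::euclidean_space set \<Rightarrow> 'a set \<Rightarrow> ('a \<Rightarrow> 'a \<Rightarrow> real) \<Rightarrow> 'a \<Rightarrow> 'a \<Rightarrow> bool" where
  "cost_assms X Y c x0 y0 \<longleftrightarrow>
     open X \<and> open Y \<and>
     (\<forall>x\<in>X. \<forall>y\<in>Y. 0 \<le> c x y) \<and>
     C2_on (X \<times> Y) (\<lambda>(x,y). c x y) \<and>
     (\<forall>x\<in>X. inj_on (grad_x c x) Y) \<and>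
     (\<forall>y\<in>Y. inj_on (\<lambda>x. grad_y c x y) X) \<and>
     (\<forall>b::real. \<forall>x'\<in>X. \<forall>y'\<in>Y. compact {x\<in>X. c x y' \<le> b} \<and> compact {y\<in>Y. c x' y \<le> b}) \<and>
     x0 \<in> X \<and> y0 \<in> Y \<and>
     (\<forall>\<epsilon>>0. \<exists>B>0. \<forall>x\<in>X. \<forall>y\<in>Y.
        (1 - \<epsilon>) * c x0 y - B * c x y0 \<le> c x y \<and> c x y \<le> (1 + \<epsilon>) * c x0 y + B * c x y0 \<and>
        (1 - \<epsilon>) * c x y0 - B * c x0 y \<le> c x y \<and> c x y \<le> (1 + \<epsilon>) * c x y0 + B * c x0 y)"

text \<open>Borel probability measures on the ambient space concentrated on S.\<close>
definition prob_on :: "'a::euclidean_space set \<Rightarrow> 'a measure \<Rightarrow> bool" where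
  "prob_on S M \<longleftrightarrow> prob_space M \<and> sets M = sets borel \<and> emeasure M (space M - S) = 0"

definition Pcost_X :: "'a::euclidean_space set \<Rightarrow> ('a \<Rightarrow> 'a \<Rightarrow> real) \<Rightarrow> 'a \<Rightarrow> 'a measure set" where
  "Pcost_X X c y0 = {\<mu>. prob_on X \<mu> \<and> set_integrable \<mu> X (\<lambda>x. c x y0)}"

definition Pcost_Y :: "'a::euclidean_space set \<Rightarrow> ('a \<Rightarrow> 'a \<Rightarrow> real) \<Rightarrow> 'a \<Rightarrow> 'a measure set" where
  "Pcost_Y Y c x0 = {\<nu>. prob_on Y \<nu> \<and> set_integrable \<nu> Y (\<lambda>y. c x0 y)}"

definition Pcost_AC_X :: "'a::euclidean_space set \<Rightarrow> ('a \<Rightarrow> 'a \<Rightarrow> real) \<Rightarrow> 'a \<Rightarrow> 'a measure set" where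
  "Pcost_AC_X X c y0 = {\<mu>\<in>Pcost_X X c y0. absolutely_continuous lborel \<mu>}"

definition couplings :: "'a::euclidean_space measure \<Rightarrow> 'a measure \<Rightarrow> ('a \<times> 'a) measure set" where
  "couplings \<mu> \<nu> = {\<pi>. prob_space \<pi> \<and> sets \<pi> = sets (borel :: ('a \<times> 'a) measure) \<and>
       distr \<pi> borel fst = \<mu> \<and> distr \<pi> borel snd = \<nu>}"

definition Kc :: "'a::euclidean_space set \<Rightarrow> 'a set \<Rightarrow> ('a \<Rightarrow> 'a \<Rightarrow> real) \<Rightarrow> 'a measure \<Rightarrow> 'a measure \<Rightarrow> ennreal" where
  "Kc X Y c \<mu> \<nu> = (INF \<pi>\<in>couplings \<mu> \<nu>. \<integral>\<^sup>+ p. indicator (X \<times> Y) p * ennreal (c (fst p) (snd p)) \<partial>\<pi>)"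

definition ctrans_Y :: "'a set \<Rightarrow> ('a \<Rightarrow> 'a \<Rightarrow> real) \<Rightarrow> ('a \<Rightarrow> real) \<Rightarrow> 'a \<Rightarrow> real" where
  "ctrans_Y Y c f x = (INF y\<in>Y. c x y - f y)"

definition Tmap :: "'a::euclidean_space set \<Rightarrow> ('a \<Rightarrow> 'a \<Rightarrow> real) \<Rightarrow> ('a \<Rightarrow> real) \<Rightarrow> 'a \<Rightarrow> 'a" where
  "Tmap Y c g x = (THE y. y \<in> Y \<and> grad_x c x y = frechet_derivative g (at x))"

end

theory Submission
  imports Defs
begin

lemma null_by_lines:
  fixes A :: "'a::euclidean_space set" and b :: 'a
  assumes A: "A \<in> sets borel" and cnt: "\<And>x. countable {t::real. x + t *\<^sub>R b \<in> A}"
  shows "A \<in> null_sets lborel"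
proof -
  have PSF: "pair_sigma_finite (lborel::'a measure) (lborel::real measure)"
    by (intro pair_sigma_finite.intro lborel.sigma_finite_measure_axioms)
  define F where "F = (\<lambda>(x::'a) (t::real). indicator {0..1} t * indicator A (x + t *\<^sub>R b) :: ennreal)"
  have meas: "case_prod F \<in> borel_measurable (lborel \<Otimes>\<^sub>M lborel)"
    unfolding F_def using A[measurable] by measurable
  have "(\<integral>\<^sup>+ x. (\<integral>\<^sup>+ t. F x t \<partial>lborel) \<partial>lborel) = 0"
  proof -
    have "(\<integral>\<^sup>+ t. F x t \<partial>lborel) = 0" for x
    proof -
      have "AE t in lborel. t \<notin> {t::real. x + t *\<^sub>R b \<in> A}"
        by (intro AE_not_in countable_imp_null_set_lborel cnt)
      then show ?thesis unfolding F_def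
        by (subst nn_integral_0_iff_AE) (use A in \<open>auto elim!: AE_mp\<close>)
    qed
    then show ?thesis by simp
  qed
  moreover have "(\<integral>\<^sup>+ t. (\<integral>\<^sup>+ x. F x t \<partial>lborel) \<partial>lborel) = emeasure lborel A"
  proof -
    have "(\<integral>\<^sup>+ x. F x t \<partial>lborel) = indicator {0..1} t * emeasure lborel A" for t
    proof -
      have "(\<integral>\<^sup>+ x. indicator A (x + t *\<^sub>R b) \<partial>lborel) = (\<integral>\<^sup>+ x. indicator A x \<partial>distr lborel borel ((+) (t *\<^sub>R b)))"
        using A by (subst nn_integral_distr) (auto simp: add.commute)
      also have "\<dots> = emeasure lborel A" using A by (simp add: lborel_distr_plus)
      finally show ?thesis unfolding F_def
        by (subst nn_integral_cmult) (use A in auto)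
    qed
    then show ?thesis by (simp add: nn_integral_multc)
  qed
  ultimately have "emeasure lborel A = 0" using pair_sigma_finite.Fubini'[OF PSF meas] by simp
  then show ?thesis using A by auto
qed

lemma cvx1_mono_slope:
  fixes \<psi> :: "real \<Rightarrow> real"
  assumes cv: "convex_on J \<psi>" and J: "t \<in> J" "t+h1 \<in> J" "t+h2 \<in> J"
    and h: "h1 \<noteq> 0" "h2 \<noteq> 0" "h1 < h2"
  shows "(\<psi>(t+h1) - \<psi> t)/h1 \<le> (\<psi>(t+h2) - \<psi> t)/h2"
proof -
  consider "h2 < 0" | "h1 < 0" "0 < h2" | "0 < h1" using h by linarith
  then show ?thesis
  proof cases
    case 1
    have "(\<psi> (t+h1) - \<psi> t) / ((t+h1) - t) \<le> (\<psi> (t+h2) - \<psi> t) / ((t+h2) - t)"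
      using convex_on_slope_le(2)[OF cv J(2) J(1), of "t+h2"] 1 h by auto
    then show ?thesis by simp
  next
    case 2
    have "(\<psi> (t+h1) - \<psi> t) / ((t+h1) - t) \<le> (\<psi> (t+h1) - \<psi> (t+h2)) / ((t+h1) - (t+h2))"
      using convex_on_slope_le(1)[OF cv J(2) J(3), of t] 2 by auto
    also have "\<dots> \<le> (\<psi> t - \<psi> (t+h2)) / (t - (t+h2))"
      using convex_on_slope_le(2)[OF cv J(2) J(3), of t] 2 by auto
    finally show ?thesis
      by (metis add_diff_cancel_left' minus_diff_eq minus_divide_divide)
  next
    case 3
    have "(\<psi> t - \<psi> (t+h1)) / (t - (t+h1)) \<le> (\<psi> t - \<psi> (t+h2)) / (t - (t+h2))"
      using convex_on_slope_le(1)[OF cv J(1) J(3), of "t+h1"] 3 h by auto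
    then show ?thesis
      by (metis add_diff_cancel_left' minus_diff_eq minus_divide_divide)
  qed
qed

definition Rd :: "(real \<Rightarrow> real) \<Rightarrow> real set \<Rightarrow> real \<Rightarrow> real" where
  "Rd \<psi> J t = Inf ((\<lambda>h. (\<psi>(t+h) - \<psi> t)/h) ` {h. 0 < h \<and> t+h \<in> J})"
definition Ld :: "(real \<Rightarrow> real) \<Rightarrow> real set \<Rightarrow> real \<Rightarrow> real" where
  "Ld \<psi> J t = Sup ((\<lambda>h. (\<psi>(t+h) - \<psi> t)/h) ` {h. h < 0 \<and> t+h \<in> J})"

context
  fixes \<psi> :: "real \<Rightarrow> real" and J :: "real set" and t :: real
  assumes cv: "convex_on J \<psi>" and oJ: "open J" and tJ: "t \<in> J"
begin

private lemma ex_pos: obtains e where "e > 0" "\<And>h. \<bar>h\<bar> < e \<Longrightarrow> t + h \<in> J"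
proof -
  obtain e where "e > 0" "ball t e \<subseteq> J" using oJ tJ openE by blast
  then show ?thesis using that[of e] by (auto simp: dist_real_def subset_iff)
qed

private lemma Rset_ne: "{h. 0 < h \<and> t+h \<in> J} \<noteq> {}"
proof -
  obtain e where e: "e > 0" "\<And>h. \<bar>h\<bar> < e \<Longrightarrow> t + h \<in> J" using ex_pos by blast
  then have "e/2 \<in> {h. 0 < h \<and> t+h \<in> J}" using e(2)[of "e/2"] by auto
  then show ?thesis by blast
qed

private lemma Lset_ne: "{h. h < 0 \<and> t+h \<in> J} \<noteq> {}"
proof -
  obtain e where e: "e > 0" "\<And>h. \<bar>h\<bar> < e \<Longrightarrow> t + h \<in> J" using ex_pos by blast
  then have "-e/2 \<in> {h. h < 0 \<and> t+h \<in> J}" using e(2)[of "-e/2"] by auto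
  then show ?thesis by blast
qed

lemma Ld_le_slope: "h < 0 \<Longrightarrow> t+h \<in> J \<Longrightarrow> (\<psi>(t+h) - \<psi> t)/h \<le> Ld \<psi> J t"
  unfolding Ld_def
proof (rule cSup_upper)
  obtain h' where "0 < h'" "t+h' \<in> J" using Rset_ne by blast
  then show "bdd_above ((\<lambda>h. (\<psi> (t + h) - \<psi> t) / h) ` {h. h < 0 \<and> t + h \<in> J})"
    by (intro bdd_aboveI[of _ "(\<psi>(t+h') - \<psi> t)/h'"]) (auto intro!: cvx1_mono_slope[OF cv tJ])
qed auto

lemma Rd_ge_slope: "0 < h \<Longrightarrow> t+h \<in> J \<Longrightarrow> Rd \<psi> J t \<le> (\<psi>(t+h) - \<psi> t)/h"
  unfolding Rd_def
proof (rule cInf_lower)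
  obtain h' where "h' < 0" "t+h' \<in> J" using Lset_ne by blast
  then show "bdd_below ((\<lambda>h. (\<psi> (t + h) - \<psi> t) / h) ` {h. 0 < h \<and> t + h \<in> J})"
    by (intro bdd_belowI[of _ "(\<psi>(t+h') - \<psi> t)/h'"]) (auto intro!: cvx1_mono_slope[OF cv tJ])
qed auto

lemma Ld_le_Rd: "Ld \<psi> J t \<le> Rd \<psi> J t"
  unfolding Ld_def Rd_def
  by (rule cSup_least) (use Lset_ne in auto, rule cInf_greatest, use Rset_ne in auto,
      intro cvx1_mono_slope[OF cv tJ], auto)

lemma Rd_tendsto: "((\<lambda>h. (\<psi>(t+h) - \<psi> t)/h) \<longlongrightarrow> Rd \<psi> J t) (at_right 0)"
proof (rule tendstoI)
  fix \<epsilon> :: real assume "\<epsilon> > 0"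
  obtain e where e: "e > 0" "\<And>h. \<bar>h\<bar> < e \<Longrightarrow> t + h \<in> J" using ex_pos by blast
  have bdd: "bdd_below ((\<lambda>h. (\<psi> (t + h) - \<psi> t) / h) ` {h. 0 < h \<and> t + h \<in> J})"
  proof -
    obtain h' where "h' < 0" "t+h' \<in> J" using Lset_ne by blast
    then show ?thesis
      by (intro bdd_belowI[of _ "(\<psi>(t+h') - \<psi> t)/h'"]) (auto intro!: cvx1_mono_slope[OF cv tJ])
  qed
  have "\<exists>h0\<in>{h. 0 < h \<and> t+h \<in> J}. (\<psi>(t+h0) - \<psi> t)/h0 < Rd \<psi> J t + \<epsilon>"
    unfolding Rd_def using cInf_less_iff[OF _ bdd, of "Rd \<psi> J t + \<epsilon>"] Rset_ne \<open>\<epsilon>>0\<close>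
    by (auto simp: Rd_def)
  then obtain h0 where h0: "0 < h0" "t+h0 \<in> J" "(\<psi>(t+h0) - \<psi> t)/h0 < Rd \<psi> J t + \<epsilon>" by auto
  have "eventually (\<lambda>h. 0 < h \<and> h < min e h0) (at_right (0::real))"
    using e h0 by (simp add: eventually_at_right_field) (metis min_less_iff_conj)
  then show "eventually (\<lambda>h. dist ((\<psi>(t+h) - \<psi> t)/h) (Rd \<psi> J t) < \<epsilon>) (at_right 0)"
  proof eventually_elim
    case (elim h)
    then have "t + h \<in> J" using e by auto
    then have "Rd \<psi> J t \<le> (\<psi>(t+h) - \<psi> t)/h" "(\<psi>(t+h) - \<psi> t)/h \<le> (\<psi>(t+h0) - \<psi> t)/h0"
      using elim Rd_ge_slope cvx1_mono_slope[OF cv tJ _ h0(2)] h0 by auto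
    then show ?case using h0 by (simp add: dist_real_def)
  qed
qed


lemma Ld_tendsto: "((\<lambda>h. (\<psi>(t+h) - \<psi> t)/h) \<longlongrightarrow> Ld \<psi> J t) (at_left 0)"
proof (rule tendstoI)
  fix \<epsilon> :: real assume "\<epsilon> > 0"
  obtain e where e: "e > 0" "\<And>h. \<bar>h\<bar> < e \<Longrightarrow> t + h \<in> J" using ex_pos by blast
  have bdd: "bdd_above ((\<lambda>h. (\<psi> (t + h) - \<psi> t) / h) ` {h. h < 0 \<and> t + h \<in> J})"
  proof -
    obtain h' where "0 < h'" "t+h' \<in> J" using Rset_ne by blast
    then show ?thesis
      by (intro bdd_aboveI[of _ "(\<psi>(t+h') - \<psi> t)/h'"]) (auto intro!: cvx1_mono_slope[OF cv tJ])
  qed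
  have "\<exists>h0\<in>{h. h < 0 \<and> t+h \<in> J}. Ld \<psi> J t - \<epsilon> < (\<psi>(t+h0) - \<psi> t)/h0"
    unfolding Ld_def using less_cSup_iff[OF _ bdd, of "Ld \<psi> J t - \<epsilon>"] Lset_ne \<open>\<epsilon>>0\<close>
    by (auto simp: Ld_def)
  then obtain h0 where h0: "h0 < 0" "t+h0 \<in> J" "Ld \<psi> J t - \<epsilon> < (\<psi>(t+h0) - \<psi> t)/h0" by auto
  have "eventually (\<lambda>h. h < 0 \<and> max (-e) h0 < h) (at_left (0::real))"
    using e h0 by (simp add: eventually_at_left_field) (metis max_less_iff_conj neg_less_0_iff_less)
  then show "eventually (\<lambda>h. dist ((\<psi>(t+h) - \<psi> t)/h) (Ld \<psi> J t) < \<epsilon>) (at_left 0)"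
  proof eventually_elim
    case (elim h)
    then have "t + h \<in> J" using e by auto
    then have "(\<psi>(t+h) - \<psi> t)/h \<le> Ld \<psi> J t" "(\<psi>(t+h0) - \<psi> t)/h0 \<le> (\<psi>(t+h) - \<psi> t)/h"
      using elim Ld_le_slope cvx1_mono_slope[OF cv tJ h0(2)] h0 by auto
    then show ?case using h0 by (simp add: dist_real_def)
  qed
qed

lemma Ld_eq_Rd_deriv: "Ld \<psi> J t = Rd \<psi> J t \<Longrightarrow> (\<psi> has_real_derivative Rd \<psi> J t) (at t)"
  unfolding DERIV_def using Ld_tendsto Rd_tendsto by (simp add: filterlim_at_split)

end

lemma Rd_le_Ld:
  fixes \<psi> :: "real \<Rightarrow> real"
  assumes cv: "convex_on J \<psi>" and oJ: "open J" and J: "t1 \<in> J" "t2 \<in> J" "t1 < t2"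
  shows "Rd \<psi> J t1 \<le> Ld \<psi> J t2"
proof -
  have "Rd \<psi> J t1 \<le> (\<psi>(t1 + (t2-t1)) - \<psi> t1)/(t2-t1)"
    using J by (intro Rd_ge_slope[OF cv oJ]) auto
  also have "\<dots> = (\<psi>(t2 + (t1-t2)) - \<psi> t2)/(t1-t2)"
    by (simp add: divide_simps) (simp add: algebra_simps)
  also have "\<dots> \<le> Ld \<psi> J t2"
    using J by (intro Ld_le_slope[OF cv oJ]) auto
  finally show ?thesis .
qed

lemma cvx1_nondiff_countable:
  fixes \<psi> :: "real \<Rightarrow> real"
  assumes cv: "convex_on J \<psi>" and oJ: "open J"
  shows "countable {t\<in>J. Ld \<psi> J t \<noteq> Rd \<psi> J t}"
proof -
  let ?S = "{t\<in>J. Ld \<psi> J t \<noteq> Rd \<psi> J t}"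
  have "\<exists>q\<in>\<rat>. Ld \<psi> J t < q \<and> q < Rd \<psi> J t" if "t \<in> ?S" for t
    using that Ld_le_Rd[OF cv oJ] Rats_dense_in_real[of "Ld \<psi> J t" "Rd \<psi> J t"]
    by (metis (mono_tags, lifting) mem_Collect_eq order_le_less)
  then obtain q where q: "\<And>t. t \<in> ?S \<Longrightarrow> q t \<in> \<rat> \<and> Ld \<psi> J t < q t \<and> q t < Rd \<psi> J t"
    by metis
  have "inj_on q ?S"
  proof (rule inj_onI)
    fix s t assume st: "s \<in> ?S" "t \<in> ?S" "q s = q t"
    show "s = t"
    proof (rule ccontr)
      assume "s \<noteq> t"
      then consider "s < t" | "t < s" by linarith
      then show False
      proof cases
        case 1 then show ?thesis using Rd_le_Ld[OF cv oJ, of s t] q[OF st(1)] q[OF st(2)] st by auto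
      next
        case 2 then show ?thesis using Rd_le_Ld[OF cv oJ, of t s] q[OF st(1)] q[OF st(2)] st by auto
      qed
    qed
  qed
  moreover have "q ` ?S \<subseteq> \<rat>" using q by auto
  ultimately show ?thesis
    using countable_rat by (metis countable_image_inj_on countable_subset)
qed

lemma convex_partials_imp_deriv:
  fixes G :: "'a::euclidean_space \<Rightarrow> real"
  assumes cv: "convex_on U G" and oU: "open U" and xU: "x \<in> U"
    and D: "\<And>b. b \<in> Basis \<Longrightarrow> ((\<lambda>s. G (x + s *\<^sub>R b)) has_real_derivative D b) (at 0)"
  shows "(G has_derivative (\<lambda>h. \<Sum>b\<in>Basis. (h \<bullet> b) * D b)) (at x)"
proof -
  define L where "L = (\<lambda>h. \<Sum>b\<in>Basis. (h \<bullet> b) * D b)"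
  have bl: "bounded_linear L" unfolding L_def
    by (intro bounded_linear_sum bounded_linear_compose[OF bounded_linear_mult_left bounded_linear_inner_left])
  obtain r where r: "r > 0" "ball x r \<subseteq> U" using oU xU openE by blast
  define n where "n = real DIM('a)"
  have n: "n \<ge> 1" unfolding n_def using DIM_positive by (simp add: Suc_le_eq)
  have UB: "\<exists>d>0. \<forall>h. norm h < d \<longrightarrow> G (x+h) - G x - L h \<le> e * norm h" if e: "e > 0" for e
  proof -
    have "\<exists>\<delta>>0. \<forall>s. \<bar>s\<bar> < \<delta> \<longrightarrow> \<bar>G (x + s *\<^sub>R b) - G x - s * D b\<bar> \<le> (e/n) * \<bar>s\<bar>"
      if b: "b \<in> Basis" for b
    proof -
      have "((\<lambda>s. G (x + s *\<^sub>R b)) has_derivative (\<lambda>s. s * D b)) (at 0)"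
        using D[OF b] unfolding has_field_derivative_def by (simp add: mult.commute[of _ "D b"])
      then have "\<forall>e'>0. \<exists>d>0. \<forall>y. norm (y - 0) < d \<longrightarrow> norm (G (x + y *\<^sub>R b) - G (x + 0 *\<^sub>R b) - (y - 0) * D b) \<le> e' * norm (y - 0)"
        unfolding has_derivative_at_alt by blast
      then obtain d where "d > 0" "\<forall>y. norm (y - 0) < d \<longrightarrow> norm (G (x + y *\<^sub>R b) - G (x + 0 *\<^sub>R b) - (y - 0) * D b) \<le> (e/n) * norm (y - 0)"
      proof -
        have "e/n > 0" using e n by simp
        from \<open>\<forall>e'>0. _\<close>[rule_format, OF this] show ?thesis by (rule exE) (rule that, auto)
      qed
      then show ?thesis by (intro exI[of _ d]) auto
    qed
    then obtain \<delta> where \<delta>: "\<And>b. b \<in> Basis \<Longrightarrow> \<delta> b > 0"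
      "\<And>b s. b \<in> Basis \<Longrightarrow> \<bar>s\<bar> < \<delta> b \<Longrightarrow> \<bar>G (x + s *\<^sub>R b) - G x - s * D b\<bar> \<le> (e/n) * \<bar>s\<bar>"
      by metis
    define d where "d = min r (Min (\<delta> ` Basis)) / n"
    have d: "d > 0" unfolding d_def using r \<delta>(1) n by auto
    have "G (x+h) - G x - L h \<le> e * norm h" if h: "norm h < d" for h
    proof -
      define y where "y b = x + (n * (h \<bullet> b)) *\<^sub>R b" for b
      have sb: "\<bar>n * (h \<bullet> b)\<bar> < min r (Min (\<delta> ` Basis))" if "b \<in> Basis" for b
      proof -
        have "\<bar>h \<bullet> b\<bar> \<le> norm h" using that Basis_le_norm by blast
        then have "\<bar>n * (h \<bullet> b)\<bar> \<le> n * norm h" using n by (simp add: abs_mult)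
        also have "\<dots> < min r (Min (\<delta> ` Basis))" using h n unfolding d_def by (simp add: field_simps)
        finally show ?thesis .
      qed
      have yU: "y b \<in> U" if "b \<in> Basis" for b
      proof -
        have "dist x (y b) = \<bar>n * (h \<bullet> b)\<bar>" using that by (simp add: y_def dist_norm)
        then show ?thesis using sb[OF that] r by auto
      qed
      have sum1: "(\<Sum>b\<in>Basis. (1/n) *\<^sub>R y b) = x + h"
      proof -
        have "(\<Sum>b\<in>Basis. (1/n) *\<^sub>R y b) = (\<Sum>b\<in>(Basis::'a set). (1/n) *\<^sub>R x) + (\<Sum>b\<in>Basis. (h \<bullet> b) *\<^sub>R b)"
        proof -
          have "(1/n) *\<^sub>R y b = (1/n) *\<^sub>R x + (h \<bullet> b) *\<^sub>R b" for b
            using n by (simp add: y_def scaleR_add_right)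
          then show ?thesis by (simp add: sum.distrib)
        qed
        also have "\<dots> = x + h" using n by (simp add: euclidean_representation n_def scaleR_sum_left[symmetric])
        finally show ?thesis .
      qed
      have "G (x + h) \<le> (\<Sum>b\<in>Basis. (1/n) * G (y b))"
        unfolding sum1[symmetric]
        by (rule convex_on_sum[OF _ _ cv]) (use n yU in \<open>auto simp: n_def\<close>)
      also have "\<dots> \<le> (\<Sum>b\<in>Basis. (1/n) * (G x + (n * (h \<bullet> b)) * D b + (e/n) * \<bar>n * (h \<bullet> b)\<bar>))"
      proof (rule sum_mono)
        fix b :: 'a assume b: "b \<in> Basis"
        have "\<bar>n * (h \<bullet> b)\<bar> < \<delta> b" using sb[OF b] Min_le[of "\<delta> ` Basis" "\<delta> b"] b by force
        then show "(1/n) * G (y b) \<le> (1/n) * (G x + (n * (h \<bullet> b)) * D b + (e/n) * \<bar>n * (h \<bullet> b)\<bar>)"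
          using \<delta>(2)[OF b, of "n * (h \<bullet> b)"] n unfolding y_def
          by (intro mult_left_mono) auto
      qed
      also have "\<dots> = G x + L h + (\<Sum>b\<in>Basis. (e/n) * \<bar>h \<bullet> b\<bar>)"
      proof -
        have t: "(1/n) * (G x + (n * (h \<bullet> b)) * D b + (e/n) * \<bar>n * (h \<bullet> b)\<bar>)
              = (1/n) * G x + (h \<bullet> b) * D b + (e/n) * \<bar>h \<bullet> b\<bar>" for b
          using n by (simp add: abs_mult algebra_simps)
        have "(\<Sum>b\<in>(Basis::'a set). (1/n) * G x) = G x" using n by (simp add: n_def)
        then show ?thesis unfolding t sum.distrib L_def by simp
      qed
      also have "(\<Sum>b\<in>Basis. (e/n) * \<bar>h \<bullet> b\<bar>) \<le> (\<Sum>b\<in>(Basis::'a set). (e/n) * norm h)"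
        using e n by (intro sum_mono mult_left_mono Basis_le_norm) auto
      also have "\<dots> = e * norm h" using n by (simp add: n_def)
      finally show ?thesis by simp
    qed
    then show ?thesis using d by blast
  qed
  show ?thesis unfolding L_def[symmetric] has_derivative_at_alt
  proof (intro conjI bl allI impI)
    fix e :: real assume e: "e > 0"
    obtain d where d: "d > 0" "\<And>h. norm h < d \<Longrightarrow> G (x+h) - G x - L h \<le> e * norm h"
      using UB[OF e] by blast
    show "\<exists>d>0. \<forall>y. norm (y - x) < d \<longrightarrow> norm (G y - G x - L (y - x)) \<le> e * norm (y - x)"
    proof (intro exI[of _ "min d r"] conjI allI impI)
      fix y assume y: "norm (y - x) < min d r"
      define h where "h = y - x"
      have hU: "x + h \<in> U" "x - h \<in> U" using y r unfolding h_def by (auto simp: dist_norm norm_minus_commute)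
      have up: "G (x+h) - G x - L h \<le> e * norm h" using d(2)[of h] y unfolding h_def by auto
      have um: "G (x-h) - G x - L (-h) \<le> e * norm h" 
      proof -
        have "norm (-h) < d" using y unfolding h_def by (simp add: norm_minus_commute)
        then show ?thesis using d(2)[of "-h"] by simp
      qed
      have mid: "G x \<le> (1/2) * G (x+h) + (1/2) * G (x-h)"
        using convex_onD[OF cv, of "1/2" "x+h" "x-h"] hU by (simp add: scaleR_add_right algebra_simps flip: scaleR_add_left)
      have "L (-h) = - L h" using bl by (simp add: linear_simps)
      then have "\<bar>G (x+h) - G x - L h\<bar> \<le> e * norm h" using up um mid by linarith
      then show "norm (G y - G x - L (y - x)) \<le> e * norm (y - x)" unfolding h_def by simp
    qed (use d r in auto)
  qed
qed

lemma line_open: "open (U::'a::real_normed_vector set) \<Longrightarrow> open {s::real. z + s *\<^sub>R b \<in> U}"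
proof -
  assume "open U"
  moreover have "{s::real. z + s *\<^sub>R b \<in> U} = (\<lambda>s. z + s *\<^sub>R b) -` U" by auto
  ultimately show ?thesis by (simp only:) (intro continuous_open_vimage continuous_intros)
qed

lemma line_convex_on:
  assumes cv: "convex_on U (G::'a::real_vector \<Rightarrow> real)"
  shows "convex_on {s::real. z + s *\<^sub>R b \<in> U} (\<lambda>s. G (z + s *\<^sub>R b))"
proof (rule convex_onI)
  have cU: "convex U" using cv convex_on_imp_convex by blast
  fix t x y :: real assume t: "0 < t" "t < 1" and xy: "x \<in> {s. z + s *\<^sub>R b \<in> U}" "y \<in> {s. z + s *\<^sub>R b \<in> U}"
  have e: "z + ((1 - t) *\<^sub>R x + t *\<^sub>R y) *\<^sub>R b = (1-t) *\<^sub>R (z + x *\<^sub>R b) + t *\<^sub>R (z + y *\<^sub>R b)"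
    by (simp add: algebra_simps)
  show "G (z + ((1 - t) *\<^sub>R x + t *\<^sub>R y) *\<^sub>R b) \<le> (1 - t) * G (z + x *\<^sub>R b) + t * G (z + y *\<^sub>R b)"
    unfolding e using convex_onD[OF cv, of t] t xy by auto
next
  have cU: "convex U" using cv convex_on_imp_convex by blast
  show "convex {s::real. z + s *\<^sub>R b \<in> U}"
    unfolding convex_def
  proof (intro ballI allI impI)
    fix x y u v :: real assume xy: "x \<in> {s. z + s *\<^sub>R b \<in> U}" "y \<in> {s. z + s *\<^sub>R b \<in> U}"
      and uv: "0 \<le> u" "0 \<le> v" "u + v = 1"
    have e: "z + (u *\<^sub>R x + v *\<^sub>R y) *\<^sub>R b = u *\<^sub>R (z + x *\<^sub>R b) + v *\<^sub>R (z + y *\<^sub>R b)"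
      using uv by (simp add: algebra_simps flip: scaleR_add_left)
    show "u *\<^sub>R x + v *\<^sub>R y \<in> {s. z + s *\<^sub>R b \<in> U}"
      using e cU xy uv by (simp add: convex_def)
  qed
qed

context
  fixes G :: "'a::euclidean_space \<Rightarrow> real" and U :: "'a set"
  assumes cv: "convex_on U G" and oU: "open U"
begin

definition "Gt x = indicator U x * G x"
definition "Rb b x = lim (\<lambda>n. real (Suc n) * (Gt (x + inverse (real (Suc n)) *\<^sub>R b) - Gt x))"
definition "Lb b x = lim (\<lambda>n. real (Suc n) * (Gt x - Gt (x - inverse (real (Suc n)) *\<^sub>R b)))"

lemma Gt_meas: "Gt \<in> borel_measurable borel"
  using borel_measurable_continuous_on_indicator[OF borel_open[OF oU] convex_on_continuous[OF oU cv]]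
  unfolding Gt_def by simp

lemma Rb_meas: "Rb b \<in> borel_measurable borel"
  unfolding Rb_def using Gt_meas by measurable

lemma Lb_meas: "Lb b \<in> borel_measurable borel"
  unfolding Lb_def using Gt_meas by measurable

lemma Rb_Lb_line:
  assumes zt: "z + t *\<^sub>R b \<in> U"
  shows "Rb b (z + t *\<^sub>R b) = Rd (\<lambda>s. G (z + s *\<^sub>R b)) {s. z + s *\<^sub>R b \<in> U} t"
    and "Lb b (z + t *\<^sub>R b) = Ld (\<lambda>s. G (z + s *\<^sub>R b)) {s. z + s *\<^sub>R b \<in> U} t"
proof -
  define \<psi> where "\<psi> = (\<lambda>s. G (z + s *\<^sub>R b))"
  define J where "J = {s. z + s *\<^sub>R b \<in> U}"
  have oJ: "open J" unfolding J_def using line_open[OF oU] .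
  have cJ: "convex_on J \<psi>" unfolding J_def \<psi>_def using line_convex_on[OF cv] .
  have tJ: "t \<in> J" using zt J_def by auto
  define h where "h n = inverse (real (Suc n))" for n
  have h0: "h \<longlonglongrightarrow> 0" unfolding h_def by (rule LIMSEQ_inverse_real_of_nat)
  have hpos: "h n > 0" for n unfolding h_def by simp
  obtain e where e: "e > 0" "ball t e \<subseteq> J" using oJ tJ openE by blast
  have ev: "eventually (\<lambda>n. h n < e) sequentially"
    using h0 e(1) by (simp add: order_tendstoD(2))
  have inJ: "h n < e \<Longrightarrow> t + h n \<in> J \<and> t - h n \<in> J" for n
    using e hpos[of n] by (auto simp: dist_real_def subset_iff)
  have hr: "filterlim h (at_right 0) sequentially"
    by (rule tendsto_imp_filterlim_at_right[OF h0]) (use hpos in auto)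
  have hl: "filterlim (\<lambda>n. - h n) (at_left 0) sequentially"
    by (rule tendsto_imp_filterlim_at_left) (use h0 hpos in \<open>auto intro: tendsto_minus_cancel_left[THEN iffD1]\<close>)
  have A: "(\<lambda>n. (\<psi>(t + h n) - \<psi> t) / h n) \<longlonglongrightarrow> Rd \<psi> J t"
    using filterlim_compose[OF Rd_tendsto[OF cJ oJ tJ] hr] by simp
  have B: "(\<lambda>n. (\<psi>(t + - h n) - \<psi> t) / (- h n)) \<longlonglongrightarrow> Ld \<psi> J t"
    using filterlim_compose[OF Ld_tendsto[OF cJ oJ tJ] hl] by simp
  have "(\<lambda>n. real (Suc n) * (Gt (z + t *\<^sub>R b + inverse (real (Suc n)) *\<^sub>R b) - Gt (z + t *\<^sub>R b))) \<longlonglongrightarrow> Rd \<psi> J t"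
  proof (rule Lim_transform_eventually[OF A])
    show "eventually (\<lambda>n. (\<psi>(t + h n) - \<psi> t) / h n = real (Suc n) * (Gt (z + t *\<^sub>R b + inverse (real (Suc n)) *\<^sub>R b) - Gt (z + t *\<^sub>R b))) sequentially"
      using ev
    proof eventually_elim
      case (elim n)
      then have "t + h n \<in> J" using inJ by blast
      then have m: "z + t *\<^sub>R b + h n *\<^sub>R b \<in> U" unfolding J_def by (simp add: scaleR_add_left add.assoc)
      have "(\<psi>(t + h n) - \<psi> t) / h n = real (Suc n) * (\<psi>(t + h n) - \<psi> t)"
        unfolding h_def by (simp add: divide_inverse mult.commute)
      then show ?case using zt m unfolding Gt_def \<psi>_def h_def
        by (simp add: scaleR_add_left add.assoc)
    qed
  qed
  then show "Rb b (z + t *\<^sub>R b) = Rd (\<lambda>s. G (z + s *\<^sub>R b)) {s. z + s *\<^sub>R b \<in> U} t"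
    unfolding Rb_def \<psi>_def J_def by (rule limI)
  have "(\<lambda>n. real (Suc n) * (Gt (z + t *\<^sub>R b) - Gt (z + t *\<^sub>R b - inverse (real (Suc n)) *\<^sub>R b))) \<longlonglongrightarrow> Ld \<psi> J t"
  proof (rule Lim_transform_eventually[OF B])
    show "eventually (\<lambda>n. (\<psi>(t + - h n) - \<psi> t) / (- h n) = real (Suc n) * (Gt (z + t *\<^sub>R b) - Gt (z + t *\<^sub>R b - inverse (real (Suc n)) *\<^sub>R b))) sequentially"
      using ev
    proof eventually_elim
      case (elim n)
      then have "t - h n \<in> J" using inJ by blast
      then have m: "z + t *\<^sub>R b - h n *\<^sub>R b \<in> U" unfolding J_def by (simp add: scaleR_diff_left algebra_simps)
      have "(\<psi>(t + - h n) - \<psi> t) / (- h n) = real (Suc n) * (\<psi> t - \<psi>(t - h n))"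
        unfolding h_def by (simp add: divide_inverse mult.commute) (simp add: algebra_simps)
      then show ?case using zt m unfolding Gt_def \<psi>_def h_def
        by (simp add: scaleR_diff_left algebra_simps)
    qed
  qed
  then show "Lb b (z + t *\<^sub>R b) = Ld (\<lambda>s. G (z + s *\<^sub>R b)) {s. z + s *\<^sub>R b \<in> U} t"
    unfolding Lb_def \<psi>_def J_def by (rule limI)
qed

lemma convex_ae_differentiable:
  "\<exists>N. N \<in> null_sets lborel \<and> (\<forall>x\<in>U - N. G differentiable (at x))"
proof -
  define Nb where "Nb b = {x\<in>U. Lb b x \<noteq> Rb b x}" for b
  have Nb_null: "Nb b \<in> null_sets lborel" for b
  proof (rule null_by_lines[where b=b])
    show "Nb b \<in> sets borel" unfolding Nb_def using Lb_meas Rb_meas borel_open[OF oU]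
      by measurable
    fix z
    have "{t. z + t *\<^sub>R b \<in> Nb b} \<subseteq> {t \<in> {s. z + s *\<^sub>R b \<in> U}.
        Ld (\<lambda>s. G (z + s *\<^sub>R b)) {s. z + s *\<^sub>R b \<in> U} t \<noteq> Rd (\<lambda>s. G (z + s *\<^sub>R b)) {s. z + s *\<^sub>R b \<in> U} t}"
      unfolding Nb_def using Rb_Lb_line by auto
    then show "countable {t. z + t *\<^sub>R b \<in> Nb b}"
      using cvx1_nondiff_countable[OF line_convex_on[OF cv] line_open[OF oU]] countable_subset by blast
  qed
  define N where "N = (\<Union>b\<in>Basis. Nb b)"
  have "N \<in> null_sets lborel" unfolding N_def using Nb_null by auto
  moreover have "G differentiable (at x)" if x: "x \<in> U - N" for x
  proof -
    have "((\<lambda>s. G (x + s *\<^sub>R b)) has_real_derivative Rb b x) (at 0)" if b: "b \<in> Basis" for b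
    proof -
      have xU: "x + 0 *\<^sub>R b \<in> U" using x by simp
      have "Lb b x = Rb b x" using x b unfolding N_def Nb_def by auto
      then show ?thesis using Rb_Lb_line[OF xU]
        Ld_eq_Rd_deriv[OF line_convex_on[OF cv, of x b] line_open[OF oU, of x b], where t=0] xU by simp
    qed
    then have "(G has_derivative (\<lambda>h. \<Sum>b\<in>Basis. (h \<bullet> b) * Rb b x)) (at x)"
      using x by (intro convex_partials_imp_deriv[OF cv oU]) auto
    then show ?thesis unfolding differentiable_def by blast
  qed
  ultimately show ?thesis by blast
qed

end

lemma convex_on_mono_grad:
  fixes G :: "'a::real_normed_vector \<Rightarrow> real"
  assumes oU: "open U" and cU: "convex U"
    and der: "\<And>x. x \<in> U \<Longrightarrow> (G has_derivative G' x) (at x)"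
    and mono: "\<And>x z. x \<in> U \<Longrightarrow> z \<in> U \<Longrightarrow> G' x (z - x) \<le> G' z (z - x)"
  shows "convex_on U G"
proof (rule convex_onI[OF _ cU])
  fix t :: real and x z assume t: "0 < t" "t < 1" and xz: "x \<in> U" "z \<in> U"
  define A where "A = {s::real. x + s *\<^sub>R (z - x) \<in> U}"
  define g where "g s = G (x + s *\<^sub>R (z - x))" for s
  define g' where "g' s = G' (x + s *\<^sub>R (z - x)) (z - x)" for s
  have cA: "convex A" unfolding A_def
    using line_convex_on[OF convex_on_const[THEN iffD2, OF cU], of x "z - x"]
    using convex_on_imp_convex by blast
  have gder: "(g has_real_derivative g' s) (at s)" if "s \<in> A" for s
  proof -
    have "((\<lambda>s. x + s *\<^sub>R (z - x)) has_derivative (\<lambda>h. h *\<^sub>R (z - x))) (at s)"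
      by (auto intro!: derivative_eq_intros)
    from has_derivative_compose[OF this der] that
    have "(g has_derivative (\<lambda>h. G' (x + s *\<^sub>R (z - x)) (h *\<^sub>R (z - x)))) (at s)"
      unfolding g_def A_def by auto
    moreover have "bounded_linear (G' (x + s *\<^sub>R (z - x)))"
      using der that unfolding A_def by (auto intro: has_derivative_bounded_linear)
    ultimately have "(g has_derivative (\<lambda>h. h * g' s)) (at s)"
      unfolding g'_def by (simp add: linear_simps)
    moreover have "(\<lambda>h. h * g' s) = (*) (g' s)" by (auto simp: fun_eq_iff)
    ultimately show ?thesis unfolding has_field_derivative_def by simp
  qed
  have gmono: "g' s \<le> g' s'" if "s \<in> A" "s' \<in> A" "s \<le> s'" for s s'
  proof (cases "s = s'")
    case False
    then have lt: "s < s'" using that by auto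
    let ?p = "x + s *\<^sub>R (z - x)" and ?q = "x + s' *\<^sub>R (z - x)"
    have pq: "?q - ?p = (s' - s) *\<^sub>R (z - x)" by (simp add: algebra_simps)
    have bl: "bounded_linear (G' ?p)" "bounded_linear (G' ?q)"
      using der that unfolding A_def by (auto intro: has_derivative_bounded_linear)
    have "G' ?p (?q - ?p) \<le> G' ?q (?q - ?p)" using mono[of ?p ?q] that unfolding A_def by blast
    then have "(s' - s) * G' ?p (z - x) \<le> (s' - s) * G' ?q (z - x)"
      unfolding pq using bl by (simp add: linear_simps)
    then show ?thesis unfolding g'_def using lt by simp
  qed simp
  have "convex_on A g"
    using cA by (intro convex_on_realI[where f'=g'] gder gmono) (auto intro: convex_connected)
  moreover have "0 \<in> A" "1 \<in> A" using xz unfolding A_def by auto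
  ultimately have "g ((1 - t) *\<^sub>R 0 + t *\<^sub>R 1) \<le> (1 - t) * g 0 + t * g 1"
    using t by (intro convex_onD) auto
  moreover have "x + t *\<^sub>R (z - x) = (1 - t) *\<^sub>R x + t *\<^sub>R z" by (simp add: algebra_simps)
  ultimately show "G ((1 - t) *\<^sub>R x + t *\<^sub>R z) \<le> (1 - t) * G x + t * G z"
    unfolding g_def by simp
qed

lemma convex_on_SUP:
  fixes G :: "'a::real_vector \<Rightarrow> real"
  assumes cv: "\<And>y. y \<in> K \<Longrightarrow> convex_on U (Gy y)" and cU: "convex U" and K: "K \<noteq> {}"
    and bdd: "\<And>x. x \<in> U \<Longrightarrow> bdd_above ((\<lambda>y. Gy y x) ` K)"
    and G: "\<And>x. x \<in> U \<Longrightarrow> G x = (SUP y\<in>K. Gy y x)"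
  shows "convex_on U G"
proof (rule convex_onI[OF _ cU])
  fix t :: real and x z assume t: "0 < t" "t < 1" and xz: "x \<in> U" "z \<in> U"
  have m: "(1 - t) *\<^sub>R x + t *\<^sub>R z \<in> U" using cU xz t by (simp add: convex_def)
  have "G ((1 - t) *\<^sub>R x + t *\<^sub>R z) = (SUP y\<in>K. Gy y ((1 - t) *\<^sub>R x + t *\<^sub>R z))" using G m by simp
  also have "\<dots> \<le> (1 - t) * G x + t * G z"
  proof (rule cSUP_least[OF K])
    fix y assume y: "y \<in> K"
    have "Gy y ((1 - t) *\<^sub>R x + t *\<^sub>R z) \<le> (1 - t) * Gy y x + t * Gy y z"
      using convex_onD[OF cv[OF y]] t xz by auto
    also have "\<dots> \<le> (1 - t) * G x + t * G z"
      using t y G xz cSUP_upper[OF y bdd] by (intro add_mono mult_left_mono) auto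
    finally show "Gy y ((1 - t) *\<^sub>R x + t *\<^sub>R z) \<le> (1 - t) * G x + t * G z" .
  qed
  finally show "G ((1 - t) *\<^sub>R x + t *\<^sub>R z) \<le> (1 - t) * G x + t * G z" .
qed

lemma partial_x_deriv:
  assumes "((\<lambda>(x,y). c x y) has_derivative D) (at (x, y))"
  shows "((\<lambda>x'. c x' y) has_derivative (\<lambda>h. D (h, 0))) (at x)"
proof -
  have "((\<lambda>x'. (x', y)) has_derivative (\<lambda>h. (h, 0))) (at x)"
    by (auto intro!: derivative_eq_intros)
  from has_derivative_compose[OF this assms] show ?thesis by simp
qed

lemma cost_assmsD:
  assumes "cost_assms X Y c x0 y0"
  shows "open X" "open Y" "\<And>x y. x \<in> X \<Longrightarrow> y \<in> Y \<Longrightarrow> 0 \<le> c x y"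
    "C2_on (X \<times> Y) (\<lambda>(x,y). c x y)"
    "\<And>x. x \<in> X \<Longrightarrow> inj_on (grad_x c x) Y"
    "\<And>b y'. y' \<in> Y \<Longrightarrow> compact {x\<in>X. c x y' \<le> b}" 
    "\<And>b x' y'. x' \<in> X \<Longrightarrow> y' \<in> Y \<Longrightarrow> compact {y\<in>Y. c x' y \<le> b}"
    "x0 \<in> X" "y0 \<in> Y"
    "\<And>\<epsilon>. \<epsilon> > 0 \<Longrightarrow> \<exists>B>0. \<forall>x\<in>X. \<forall>y\<in>Y.
        (1 - \<epsilon>) * c x0 y - B * c x y0 \<le> c x y \<and> c x y \<le> (1 + \<epsilon>) * c x0 y + B * c x y0 \<and>
        (1 - \<epsilon>) * c x y0 - B * c x0 y \<le> c x y \<and> c x y \<le> (1 + \<epsilon>) * c x y0 + B * c x0 y"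
  using assms unfolding cost_assms_def by auto

lemma cost_C2:
  assumes "cost_assms X Y c x0 y0"
  obtains D :: "'a::euclidean_space \<times> 'a \<Rightarrow> (('a \<times> 'a) \<Rightarrow>\<^sub>L real)" and D2
  where "\<And>p. p \<in> X \<times> Y \<Longrightarrow> ((\<lambda>(x,y). c x y) has_derivative blinfun_apply (D p)) (at p)"
    "\<And>p. p \<in> X \<times> Y \<Longrightarrow> (D has_derivative blinfun_apply (D2 p)) (at p)"
    "continuous_on (X \<times> Y) D2"
  using cost_assmsD(4)[OF assms] unfolding C2_on_def by blast

lemma cost_continuous:
  assumes ca: "cost_assms X Y c x0 y0"
  shows "continuous_on (X \<times> Y) (\<lambda>(x,y). c x y)"
proof -
  obtain D :: "'a \<times> 'a \<Rightarrow> (('a \<times> 'a) \<Rightarrow>\<^sub>L real)" and D2 where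
    D: "\<And>p. p \<in> X \<times> Y \<Longrightarrow> ((\<lambda>(x,y). c x y) has_derivative blinfun_apply (D p)) (at p)"
    using cost_C2[OF ca] by metis
  have "open (X \<times> Y)" using cost_assmsD(1,2)[OF ca] by (simp add: open_Times)
  then show ?thesis
    unfolding continuous_on_eq_continuous_at[OF \<open>open (X \<times> Y)\<close>]
    using D has_derivative_continuous by blast
qed

lemma cost_cont_x:
  assumes ca: "cost_assms X Y c x0 y0" and y: "y \<in> Y"
  shows "continuous_on X (\<lambda>x. c x y)"
proof -
  have "continuous_on X ((\<lambda>(x,y). c x y) \<circ> (\<lambda>x. (x, y)))"
    by (rule continuous_on_compose) (use y in \<open>auto intro!: continuous_intros
        intro: continuous_on_subset[OF cost_continuous[OF ca]]\<close>)
  then show ?thesis by (simp add: o_def)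
qed

lemma cost_cont_y:
  assumes ca: "cost_assms X Y c x0 y0" and x: "x \<in> X"
  shows "continuous_on Y (\<lambda>y. c x y)"
proof -
  have "continuous_on Y ((\<lambda>(x,y). c x y) \<circ> (\<lambda>y. (x, y)))"
    by (rule continuous_on_compose) (use x in \<open>auto intro!: continuous_intros
        intro: continuous_on_subset[OF cost_continuous[OF ca]]\<close>)
  then show ?thesis by (simp add: o_def)
qed


lemma a_minus_INF:
  fixes h :: "'b \<Rightarrow> real"
  assumes K: "K \<noteq> {}" and bdd: "bdd_below (h ` K)"
  shows "a - (INF y\<in>K. h y) = (SUP y\<in>K. a - h y)"
proof (rule antisym)
  have bddA: "bdd_above ((\<lambda>y. a - h y) ` K)"
    using bdd cINF_lower[OF bdd] by (intro bdd_aboveI[of _ "a - (INF y\<in>K. h y)"]) auto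
  have "a - (SUP y\<in>K. a - h y) \<le> (INF y\<in>K. h y)"
    using K cSUP_upper[OF _ bddA] by (intro cINF_greatest) (auto simp: algebra_simps)
  then show "a - (INF y\<in>K. h y) \<le> (SUP y\<in>K. a - h y)" by simp
  show "(SUP y\<in>K. a - h y) \<le> a - (INF y\<in>K. h y)"
    using K cINF_lower[OF bdd] by (intro cSUP_least) auto
qed

lemma local_semiconvex:
  fixes X Y :: "'a::euclidean_space set" and c :: "'a \<Rightarrow> 'a \<Rightarrow> real" and \<phi> :: "'a \<Rightarrow> real"
  assumes ca: "cost_assms X Y c x0 y0" and phiB: "\<And>y. y \<in> Y \<Longrightarrow> \<bar>\<phi> y\<bar> \<le> M\<phi>"
    and phic: "continuous_on Y \<phi>" and x1: "x1 \<in> X"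
  shows "\<exists>r>0. ball x1 r \<subseteq> X \<and> (\<exists>L. convex_on (ball x1 r) (\<lambda>x. L * (x \<bullet> x) - ctrans_Y Y c (\<lambda>y. - \<phi> y) x))"
proof -
  note cd = cost_assmsD[OF ca]
  obtain D :: "'a \<times> 'a \<Rightarrow> (('a \<times> 'a) \<Rightarrow>\<^sub>L real)" and D2 where
    Dd: "\<And>p. p \<in> X \<times> Y \<Longrightarrow> ((\<lambda>(x,y). c x y) has_derivative blinfun_apply (D p)) (at p)" and
    D2d: "\<And>p. p \<in> X \<times> Y \<Longrightarrow> (D has_derivative blinfun_apply (D2 p)) (at p)" and
    D2c: "continuous_on (X \<times> Y) D2"
    using cost_C2[OF ca] by metis
  obtain r where r: "r > 0" "cball x1 r \<subseteq> X" using cd(1) x1 open_contains_cball by blast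
  have Mphi: "0 \<le> M\<phi>" using phiB[OF cd(9)] by linarith
  obtain xm where xm: "xm \<in> cball x1 r" "\<And>x. x \<in> cball x1 r \<Longrightarrow> c x y0 \<le> c xm y0"
    using continuous_attains_sup[OF compact_cball, of x1 r "\<lambda>x. c x y0"] r
      continuous_on_subset[OF cost_cont_x[OF ca cd(9)] r(2)] by auto
  define Cm where "Cm = c xm y0"
  have Cm0: "0 \<le> Cm" unfolding Cm_def using xm r cd(3)[OF _ cd(9)] by auto
  obtain B where B: "B > 0" "\<And>x y. x \<in> X \<Longrightarrow> y \<in> Y \<Longrightarrow> (1 - 1/2) * c x0 y - B * c x y0 \<le> c x y"
    using cd(10)[of "1/2"] by auto
  define M0 where "M0 = 2 * (B * Cm + Cm + 2 * M\<phi> + 1) + c x0 y0"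
  define K where "K = {y\<in>Y. c x0 y \<le> M0}"
  have cK: "compact K" unfolding K_def using cd(7)[OF cd(8) cd(9)] .
  have KY: "K \<subseteq> Y" unfolding K_def by auto
  have y0K: "y0 \<in> K" unfolding K_def M0_def using cd(9) B(1) Cm0 Mphi by auto
  have far: "c x y0 + \<phi> y0 + 1 \<le> c x y + \<phi> y" if x: "x \<in> cball x1 r" and y: "y \<in> Y" "y \<notin> K" for x y
  proof -
    have xX: "x \<in> X" using x r by auto
    have "c x0 y > M0" using y unfolding K_def by auto
    moreover have "B * c x y0 \<le> B * Cm" using xm(2)[OF x] B(1) unfolding Cm_def by simp
    moreover have "(1 - 1/2) * c x0 y - B * c x y0 \<le> c x y" using B(2)[OF xX y(1)] .
    moreover have "c x y0 \<le> Cm" using xm(2)[OF x] unfolding Cm_def .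
    moreover have "0 \<le> c x0 y0" using cd(3)[OF cd(8) cd(9)] .
    moreover have "(1 - 1/2) * c x0 y = c x0 y / 2" by simp
    ultimately have f1: "c x0 y / 2 - B * Cm \<le> c x y" by linarith
    have "B * Cm + Cm + 2 * M\<phi> + 1 < c x0 y / 2"
      using \<open>c x0 y > M0\<close> M0_def \<open>0 \<le> c x0 y0\<close> by argo
    note f1 this
    then have "c x y \<ge> c x y0 + 2 * M\<phi> + 1" using \<open>c x y0 \<le> Cm\<close> by linarith
    then show ?thesis using phiB[OF y(1)] phiB[OF cd(9)] by linarith
  qed
  define h where "h x y = c x y + \<phi> y" for x y
  have hbdd: "bdd_below (h x ` S)" if "x \<in> X" "S \<subseteq> Y" for x S
    using that cd(3) phiB unfolding h_def
    by (intro bdd_belowI[of _ "- M\<phi>"]) (force simp: abs_le_iff)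
  have frep: "ctrans_Y Y c (\<lambda>y. - \<phi> y) x = (INF y\<in>K. h x y)" if x: "x \<in> cball x1 r" for x
  proof -
    have xX: "x \<in> X" using x r by auto
    have "ctrans_Y Y c (\<lambda>y. - \<phi> y) x = (INF y\<in>Y. h x y)" unfolding ctrans_Y_def h_def by simp
    also have "\<dots> = (INF y\<in>K. h x y)"
    proof (rule antisym)
      show "(INF y\<in>Y. h x y) \<le> (INF y\<in>K. h x y)"
        using y0K KY hbdd[OF xX order_refl] by (intro cINF_superset_mono) auto
      show "(INF y\<in>K. h x y) \<le> (INF y\<in>Y. h x y)"
      proof (rule cINF_greatest)
        show "Y \<noteq> {}" using cd(9) by auto
        fix y assume y: "y \<in> Y"
        show "(INF y\<in>K. h x y) \<le> h x y"
        proof (cases "y \<in> K")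
          case True then show ?thesis using hbdd[OF xX KY] by (intro cINF_lower) auto
        next
          case False
          have "(INF y\<in>K. h x y) \<le> h x y0" using hbdd[OF xX KY] y0K by (intro cINF_lower) auto
          also have "\<dots> \<le> h x y" using far[OF x y False] unfolding h_def by simp
          finally show ?thesis .
        qed
      qed
    qed
    finally show ?thesis .
  qed
  have KXY: "cball x1 r \<times> K \<subseteq> X \<times> Y" using r KY by auto
  have "bounded (D2 ` (cball x1 r \<times> K))"
    by (intro compact_imp_bounded compact_continuous_image continuous_on_subset[OF D2c KXY]
        compact_Times compact_cball cK)
  then obtain L where L0: "L > 0" "\<forall>q\<in>D2 ` (cball x1 r \<times> K). norm q \<le> L"
    unfolding bounded_pos by blast
  have L: "L > 0" "\<And>p. p \<in> cball x1 r \<times> K \<Longrightarrow> norm (D2 p) \<le> L"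
    using L0 by auto
  have lip: "norm (D (z, y) - D (x, y)) \<le> L * norm (z - x)"
    if y: "y \<in> K" and x: "x \<in> cball x1 r" and z: "z \<in> cball x1 r" for x y z
  proof -
    have "norm (D (z, y) - D (x, y)) \<le> L * norm ((z, y) - (x, y))"
    proof (rule differentiable_bound[where S="cball x1 r \<times> {y}" and f'="\<lambda>p. blinfun_apply (D2 p)"])
      show "convex (cball x1 r \<times> {y})" by (intro convex_Times convex_cball convex_singleton)
      fix p assume p: "p \<in> cball x1 r \<times> {y}"
      then have "p \<in> X \<times> Y" using KXY y by auto
      then show "(D has_derivative blinfun_apply (D2 p)) (at p within cball x1 r \<times> {y})"
        using D2d has_derivative_at_withinI by blast
      have "p \<in> cball x1 r \<times> K" using p y by auto
      then show "onorm (blinfun_apply (D2 p)) \<le> L" using L(2) by (simp add: norm_blinfun.rep_eq[symmetric])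
    qed (use x z in auto)
    then show ?thesis by simp
  qed
  define Gy where "Gy y x = L * (x \<bullet> x) - h x y" for y x
  have Gycv: "convex_on (ball x1 r) (Gy y)" if y: "y \<in> K" for y
  proof (rule convex_on_mono_grad[where G'="\<lambda>x h. L * (h \<bullet> x + x \<bullet> h) - blinfun_apply (D (x, y)) (h, 0)"])
    fix x assume x: "x \<in> ball x1 r"
    then have xy: "(x, y) \<in> X \<times> Y" using r y KY by auto
    have pd: "((\<lambda>x'. c x' y) has_derivative (\<lambda>h. blinfun_apply (D (x, y)) (h, 0))) (at x)"
      using partial_x_deriv[OF Dd[OF xy]] .
    show "(Gy y has_derivative (\<lambda>h. L * (h \<bullet> x + x \<bullet> h) - blinfun_apply (D (x, y)) (h, 0))) (at x)"
      unfolding Gy_def h_def by (auto intro!: derivative_eq_intros pd)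
  next
    fix x z assume x: "x \<in> ball x1 r" and z: "z \<in> ball x1 r"
    have l: "norm (D (z, y) - D (x, y)) \<le> L * norm (z - x)" using lip[OF y, of x z] x z by auto
    have "\<bar>blinfun_apply (D (z, y) - D (x, y)) (z - x, 0)\<bar> \<le> norm (D (z, y) - D (x, y)) * norm (z - x, 0::'a)"
      using norm_blinfun by (metis real_norm_def)
    also have "\<dots> \<le> L * norm (z - x) * norm (z - x)"
      using l by (simp add: mult_right_mono)
    finally have b: "\<bar>blinfun_apply (D (z, y)) (z - x, 0) - blinfun_apply (D (x, y)) (z - x, 0)\<bar> \<le> L * ((z - x) \<bullet> (z - x))"
      by (simp add: blinfun.diff_left power2_norm_eq_inner[symmetric] power2_eq_square mult.assoc)
    have "L * ((z - x) \<bullet> x + x \<bullet> (z - x)) + 2 * L * ((z - x) \<bullet> (z - x)) = L * ((z - x) \<bullet> z + z \<bullet> (z - x))"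
      by (simp add: algebra_simps inner_commute)
    moreover have "0 \<le> L * ((z - x) \<bullet> (z - x))" using L by simp
    ultimately show "L * ((z - x) \<bullet> x + x \<bullet> (z - x)) - blinfun_apply (D (x, y)) (z - x, 0)
        \<le> L * ((z - x) \<bullet> z + z \<bullet> (z - x)) - blinfun_apply (D (z, y)) (z - x, 0)"
      using b by linarith
  qed (auto)
  have "convex_on (ball x1 r) (\<lambda>x. L * (x \<bullet> x) - ctrans_Y Y c (\<lambda>y. - \<phi> y) x)"
  proof (rule convex_on_SUP[where K=K and Gy=Gy])
    fix x assume x: "x \<in> ball x1 r"
    then have xc: "x \<in> cball x1 r" and xX: "x \<in> X" using r by auto
    show "L * (x \<bullet> x) - ctrans_Y Y c (\<lambda>y. - \<phi> y) x = (SUP y\<in>K. Gy y x)"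
      unfolding frep[OF xc] Gy_def using a_minus_INF[OF _ hbdd[OF xX KY]] y0K by auto
    show "bdd_above ((\<lambda>y. Gy y x) ` K)"
      unfolding Gy_def using cINF_lower[OF hbdd[OF xX KY]]
      by (intro bdd_aboveI[of _ "L * (x \<bullet> x) - (INF y\<in>K. h x y)"]) auto
  qed (use Gycv y0K in auto)
  then show ?thesis using r by (intro exI[of _ r]) auto
qed

lemma ctrans_regular:
  fixes X Y :: "'a::euclidean_space set" and c :: "'a \<Rightarrow> 'a \<Rightarrow> real" and \<phi> :: "'a \<Rightarrow> real"
  assumes ca: "cost_assms X Y c x0 y0" and phiB: "\<And>y. y \<in> Y \<Longrightarrow> \<bar>\<phi> y\<bar> \<le> M\<phi>"
    and phic: "continuous_on Y \<phi>"
  shows "continuous_on X (ctrans_Y Y c (\<lambda>y. - \<phi> y))"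
    and "\<exists>N\<in>null_sets lborel. \<forall>x\<in>X - N. ctrans_Y Y c (\<lambda>y. - \<phi> y) differentiable (at x)"
proof -
  define f where "f = ctrans_Y Y c (\<lambda>y. - \<phi> y)"
  have loc: "\<exists>r>0. ball x1 r \<subseteq> X \<and> (\<exists>L. convex_on (ball x1 r) (\<lambda>x. L * (x \<bullet> x) - f x))"
    if "x1 \<in> X" for x1
    unfolding f_def using local_semiconvex[OF ca phiB phic that] by blast
  have ball_props: "continuous_on (ball x1 r) f \<and> (\<exists>N\<in>null_sets lborel. \<forall>x\<in>ball x1 r - N. f differentiable (at x))"
    if cv: "convex_on (ball x1 r) (\<lambda>x. L * (x \<bullet> x) - f x)" for x1 r L
  proof
    have feq: "f x = L * (x \<bullet> x) - (L * (x \<bullet> x) - f x)" for x by simp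
    have "continuous_on (ball x1 r) (\<lambda>x. L * (x \<bullet> x) - (L * (x \<bullet> x) - f x))"
      by (intro continuous_intros convex_on_continuous[OF open_ball cv])
    then show "continuous_on (ball x1 r) f" by simp
    obtain N where N: "N \<in> null_sets lborel" "\<forall>x\<in>ball x1 r - N. (\<lambda>x. L * (x \<bullet> x) - f x) differentiable (at x)"
      using convex_ae_differentiable[OF cv open_ball] by blast
    have "f differentiable (at x)" if "x \<in> ball x1 r - N" for x
    proof -
      have d1: "(\<lambda>x. L * (x \<bullet> x) - f x) differentiable (at x)" using N(2) that by blast
      have d2: "(\<lambda>x. L * (x \<bullet> x)) differentiable (at x)"
        unfolding differentiable_def by (auto intro!: derivative_eq_intros)
      have "(\<lambda>x. L * (x \<bullet> x) - (L * (x \<bullet> x) - f x)) differentiable (at x)"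
        using differentiable_diff[OF d2 d1] by simp
      then show ?thesis by simp
    qed
    then show "\<exists>N\<in>null_sets lborel. \<forall>x\<in>ball x1 r - N. f differentiable (at x)" using N(1) by blast
  qed
  obtain \<rho> where \<rho>: "\<And>x1. x1 \<in> X \<Longrightarrow> \<rho> x1 > 0 \<and> ball x1 (\<rho> x1) \<subseteq> X \<and>
      continuous_on (ball x1 (\<rho> x1)) f \<and> (\<exists>N\<in>null_sets lborel. \<forall>x\<in>ball x1 (\<rho> x1) - N. f differentiable (at x))"
  proof -
    have "\<forall>x1\<in>X. \<exists>r. r > 0 \<and> ball x1 r \<subseteq> X \<and>
      continuous_on (ball x1 r) f \<and> (\<exists>N\<in>null_sets lborel. \<forall>x\<in>ball x1 r - N. f differentiable (at x))"
    proof
      fix x1 assume "x1 \<in> X"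
      then obtain r L where r: "r > 0" "ball x1 r \<subseteq> X" and cvr: "convex_on (ball x1 r) (\<lambda>x. L * (x \<bullet> x) - f x)"
        using loc by blast
      note bp = ball_props[OF cvr]
      then show "\<exists>r. r > 0 \<and> ball x1 r \<subseteq> X \<and>
        continuous_on (ball x1 r) f \<and> (\<exists>N\<in>null_sets lborel. \<forall>x\<in>ball x1 r - N. f differentiable (at x))"
        using r bp by (intro exI[of _ r]) simp
    qed
    from bchoice[OF this] obtain g where g: "\<forall>x1\<in>X. g x1 > 0 \<and> ball x1 (g x1) \<subseteq> X \<and>
      continuous_on (ball x1 (g x1)) f \<and> (\<exists>N\<in>null_sets lborel. \<forall>x\<in>ball x1 (g x1) - N. f differentiable (at x))"
      by blast
    show ?thesis by (rule that[of g]) (use g in simp)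
  qed
  show "continuous_on X (ctrans_Y Y c (\<lambda>y. - \<phi> y))"
    unfolding f_def[symmetric] continuous_on_eq_continuous_at[OF cost_assmsD(1)[OF ca]]
  proof
    fix x assume x: "x \<in> X"
    have "continuous_on (ball x (\<rho> x)) f" using \<rho>[OF x] by blast
    then show "isCont f x" using \<rho>[OF x] by (simp add: continuous_on_eq_continuous_at)
  qed
  define F where "F = (\<lambda>x1. ball x1 (\<rho> x1)) ` X"
  obtain F' where F': "F' \<subseteq> F" "countable F'" "\<Union>F' = \<Union>F"
    using Lindelof[of F] unfolding F_def by auto
  have "\<forall>B\<in>F'. \<exists>N\<in>null_sets lborel. \<forall>x\<in>B - N. f differentiable (at x)"
  proof
    fix B assume "B \<in> F'"
    then obtain x1 where x1: "x1 \<in> X" "B = ball x1 (\<rho> x1)" using F'(1) unfolding F_def by auto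
    show "\<exists>N\<in>null_sets lborel. \<forall>x\<in>B - N. f differentiable (at x)" using \<rho>[OF x1(1)] x1(2) by simp
  qed
  then obtain NB where NB: "\<And>B. B \<in> F' \<Longrightarrow> NB B \<in> null_sets lborel \<and> (\<forall>x\<in>B - NB B. f differentiable (at x))"
    by metis
  have "(\<Union>B\<in>F'. NB B) \<in> null_sets lborel" using NB F'(2) by (intro null_sets_UN') auto
  moreover have "f differentiable (at x)" if x: "x \<in> X - (\<Union>B\<in>F'. NB B)" for x
  proof -
    have "x \<in> ball x (\<rho> x)" using \<rho>[of x] x by simp
    moreover have "ball x (\<rho> x) \<in> F" unfolding F_def using x by (intro imageI) auto
    ultimately have "x \<in> \<Union>F" by (rule UnionI[rotated])
    then obtain B where "B \<in> F'" "x \<in> B" using F'(3) by auto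
    have "x \<in> B - NB B" using x \<open>B \<in> F'\<close> \<open>x \<in> B\<close> by auto
    then show ?thesis using NB[OF \<open>B \<in> F'\<close>] by (elim conjE bspec)
  qed
  ultimately show "\<exists>N\<in>null_sets lborel. \<forall>x\<in>X - N. ctrans_Y Y c (\<lambda>y. - \<phi> y) differentiable (at x)"
    unfolding f_def by blast
qed

lemma countable_dense_subset:
  fixes A :: "'a::second_countable_topology set"
  obtains D where "countable D" "D \<subseteq> A" "\<And>y U. y \<in> A \<Longrightarrow> open U \<Longrightarrow> y \<in> U \<Longrightarrow> \<exists>d\<in>D. d \<in> U"
proof -
  obtain \<B> :: "'a set set" where B: "countable \<B>" "\<And>C. C \<in> \<B> \<Longrightarrow> open C"
    "\<And>S. open S \<Longrightarrow> \<exists>U. U \<subseteq> \<B> \<and> S = \<Union>U"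
    using univ_second_countable by blast
  define pick where "pick b = (SOME x. x \<in> b \<inter> A)" for b
  define D where "D = pick ` {b\<in>\<B>. b \<inter> A \<noteq> {}}"
  have pk: "b \<inter> A \<noteq> {} \<Longrightarrow> pick b \<in> b \<inter> A" for b
    unfolding pick_def by (rule someI_ex) blast
  show ?thesis
  proof (rule that)
    show "countable D" unfolding D_def using B(1) by auto
    show "D \<subseteq> A" unfolding D_def using pk by auto
    fix y U assume y: "y \<in> A" "open U" "y \<in> U"
    obtain V where V: "V \<subseteq> \<B>" "U = \<Union>V" using B(3)[OF y(2)] by blast
    then obtain b where b: "b \<in> V" "y \<in> b" using y(3) by auto
    then have "b \<inter> A \<noteq> {}" using y(1) by auto
    then have "pick b \<in> D" "pick b \<in> U" using pk b V unfolding D_def by auto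
    then show "\<exists>d\<in>D. d \<in> U" by blast
  qed
qed

locale ots =
  fixes X Y :: "'a::euclidean_space set" and c :: "'a \<Rightarrow> 'a \<Rightarrow> real" and x0 y0 :: 'a
    and \<phi> :: "'a \<Rightarrow> real" and M\<phi> :: real
  assumes ca: "cost_assms X Y c x0 y0" and phiB: "\<And>y. y \<in> Y \<Longrightarrow> \<bar>\<phi> y\<bar> \<le> M\<phi>"
    and phic: "continuous_on Y \<phi>"
begin

definition "f = ctrans_Y Y c (\<lambda>y. - \<phi> y)"

lemmas cd = cost_assmsD[OF ca]

lemma Mphi: "0 \<le> M\<phi>" using phiB[OF cd(9)] by linarith

lemma f_eq: "f x = (INF y\<in>Y. c x y + \<phi> y)"
  unfolding f_def ctrans_Y_def by simp

lemma hbdd: "x \<in> X \<Longrightarrow> bdd_below ((\<lambda>y. c x y + \<phi> y) ` Y)"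
  using cd(3) phiB by (intro bdd_belowI[of _ "- M\<phi>"]) (force simp: abs_le_iff)

lemma f_le: "x \<in> X \<Longrightarrow> y \<in> Y \<Longrightarrow> f x \<le> c x y + \<phi> y"
  unfolding f_eq using hbdd by (intro cINF_lower) auto

lemma f_ge: "x \<in> X \<Longrightarrow> - M\<phi> \<le> f x"
  unfolding f_eq using cd(3,9) phiB by (intro cINF_greatest) (force simp: abs_le_iff)+

lemma f_le0: "x \<in> X \<Longrightarrow> f x \<le> c x y0 + M\<phi>"
  using f_le[OF _ cd(9), of x] phiB[OF cd(9)] by linarith

lemma val_cont: "x \<in> X \<Longrightarrow> continuous_on Y (\<lambda>y. c x y + \<phi> y)"
  by (intro continuous_intros cost_cont_y[OF ca] phic)

lemma min_on_closed:
  assumes x: "x \<in> X" and F: "closed F" and ap: "\<And>\<epsilon>. \<epsilon> > 0 \<Longrightarrow> \<exists>y\<in>F \<inter> Y. c x y + \<phi> y < f x + \<epsilon>"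
  shows "\<exists>y\<in>F \<inter> Y. f x = c x y + \<phi> y"
proof -
  define S where "S = {y\<in>Y. c x y \<le> f x + 1 + M\<phi>} \<inter> F"
  have cS: "compact S" unfolding S_def using cd(7)[OF x cd(9)] F by (intro compact_Int_closed)
  have inS: "y \<in> S" if "y \<in> F \<inter> Y" "c x y + \<phi> y < f x + \<epsilon>" "\<epsilon> \<le> 1" for y \<epsilon>
    using that phiB[of y] unfolding S_def by (auto simp: abs_le_iff)
  obtain y1 where y1: "y1 \<in> F \<inter> Y" "c x y1 + \<phi> y1 < f x + 1" using ap[of 1] by auto
  have "S \<noteq> {}" using inS[OF y1] by auto
  moreover have "continuous_on S (\<lambda>y. c x y + \<phi> y)"
    by (rule continuous_on_subset[OF val_cont[OF x]]) (auto simp: S_def)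
  ultimately obtain ys where ys: "ys \<in> S" "\<And>y. y \<in> S \<Longrightarrow> c x ys + \<phi> ys \<le> c x y + \<phi> y"
    using continuous_attains_inf[OF cS] by blast
  have ysFY: "ys \<in> F \<inter> Y" using ys(1) unfolding S_def by auto
  have "c x ys + \<phi> ys \<le> f x"
  proof (rule ccontr)
    assume nt: "\<not> c x ys + \<phi> ys \<le> f x"
    define \<epsilon> where "\<epsilon> = min 1 (c x ys + \<phi> ys - f x)"
    have \<epsilon>: "\<epsilon> > 0" "\<epsilon> \<le> 1" using nt unfolding \<epsilon>_def by auto
    obtain y where y: "y \<in> F \<inter> Y" "c x y + \<phi> y < f x + \<epsilon>" using ap[OF \<epsilon>(1)] by blast
    have "c x ys + \<phi> ys \<le> c x y + \<phi> y" using ys(2)[OF inS[OF y \<epsilon>(2)]] .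
    then show False using y(2) unfolding \<epsilon>_def by linarith
  qed
  moreover have "f x \<le> c x ys + \<phi> ys" using f_le[OF x] ysFY by auto
  ultimately show ?thesis using ysFY by (intro bexI[of _ ys]) auto
qed

lemma minimizer: assumes x: "x \<in> X" shows "\<exists>y\<in>Y. f x = c x y + \<phi> y"
proof -
  have "\<exists>y\<in>UNIV \<inter> Y. c x y + \<phi> y < f x + \<epsilon>" if "\<epsilon> > 0" for \<epsilon>
  proof -
    have "(INF y\<in>Y. c x y + \<phi> y) < f x + \<epsilon>" using that f_eq by simp
    then have "\<exists>y\<in>Y. c x y + \<phi> y < f x + \<epsilon>" using cINF_less_iff[OF _ hbdd[OF x]] cd(9) by blast
    then show ?thesis by auto
  qed
  from min_on_closed[OF x closed_UNIV this] show ?thesis by auto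
qed

lemma Tmap_min:
  assumes x: "x \<in> X" and fd: "f differentiable (at x)" and y: "y \<in> Y" and m: "f x = c x y + \<phi> y"
  shows "Tmap Y c f x = y"
proof -
  obtain D :: "'a \<times> 'a \<Rightarrow> (('a \<times> 'a) \<Rightarrow>\<^sub>L real)" and D2 where
    Dd: "\<And>p. p \<in> X \<times> Y \<Longrightarrow> ((\<lambda>(x,y). c x y) has_derivative blinfun_apply (D p)) (at p)"
    using cost_C2[OF ca] by metis
  have pd: "((\<lambda>x'. c x' y) has_derivative (\<lambda>h. blinfun_apply (D (x, y)) (h, 0))) (at x)"
    using partial_x_deriv[OF Dd] x y by auto
  have fD: "(f has_derivative frechet_derivative f (at x)) (at x)"
    using fd frechet_derivative_works by blast
  have "((\<lambda>x'. c x' y + \<phi> y - f x') has_derivative (\<lambda>h. blinfun_apply (D (x, y)) (h, 0) - frechet_derivative f (at x) h)) (at x)"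
    using has_derivative_diff[OF has_derivative_add[OF pd has_derivative_const] fD] by simp
  moreover have "eventually (\<lambda>x'. c x y + \<phi> y - f x \<le> c x' y + \<phi> y - f x') (at x)"
  proof -
    have "eventually (\<lambda>x'. x' \<in> X) (at x)" using cd(1) x by (rule eventually_at_in_open')
    then show ?thesis by eventually_elim (use m f_le y in auto)
  qed
  ultimately have "(\<lambda>h. blinfun_apply (D (x, y)) (h, 0) - frechet_derivative f (at x) h) = (\<lambda>h. 0)"
    by (rule has_derivative_local_min)
  then have eqD: "(\<lambda>h. blinfun_apply (D (x, y)) (h, 0)) = frechet_derivative f (at x)"
    by (auto simp: fun_eq_iff)
  have gx: "grad_x c x y' = (\<lambda>h. blinfun_apply (D (x, y')) (h, 0))" if "y' \<in> Y" for y'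
    unfolding grad_x_def using partial_x_deriv[OF Dd, of x y'] x that
    by (intro frechet_derivative_at[symmetric]) auto
  show ?thesis unfolding Tmap_def
  proof (rule the_equality)
    show "y \<in> Y \<and> grad_x c x y = frechet_derivative f (at x)" using y gx eqD by auto
    fix y' assume y': "y' \<in> Y \<and> grad_x c x y' = frechet_derivative f (at x)"
    then have "grad_x c x y' = grad_x c x y" using y gx eqD by auto
    then show "y' = y" using cd(5)[OF x] y y' by (auto dest: inj_onD)
  qed
qed

end

context ots begin

lemma f_cont: "continuous_on X f"
  unfolding f_def using ctrans_regular(1)[OF ca phiB phic] .

definition "N0 = (SOME N. N \<in> null_sets lborel \<and> (\<forall>x\<in>X - N. f differentiable (at x)))"

lemma N0: "N0 \<in> null_sets lborel" "\<And>x. x \<in> X - N0 \<Longrightarrow> f differentiable (at x)"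
proof -
  have "\<exists>N. N \<in> null_sets lborel \<and> (\<forall>x\<in>X - N. f differentiable (at x))"
    using ctrans_regular(2)[OF ca phiB phic] unfolding f_def by blast
  from someI_ex[OF this] show "N0 \<in> null_sets lborel" "\<And>x. x \<in> X - N0 \<Longrightarrow> f differentiable (at x)"
    unfolding N0_def by auto
qed

definition "X' = X - N0"
definition "T x = (if x \<in> X' then Tmap Y c f x else y0)"

lemma X'_sets: "X' \<in> sets borel"
  unfolding X'_def using N0(1) cd(1) by auto

lemma T_props: "x \<in> X' \<Longrightarrow> T x \<in> Y \<and> f x = c x (T x) + \<phi> (T x)"
proof -
  assume x: "x \<in> X'"
  then have xX: "x \<in> X" and fd: "f differentiable (at x)" using N0(2) unfolding X'_def by auto
  obtain y where y: "y \<in> Y" "f x = c x y + \<phi> y" using minimizer[OF xX] by blast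
  have "T x = y" unfolding T_def using x Tmap_min[OF xX fd y] by simp
  then show ?thesis using y by simp
qed

lemma T_Y: "T x \<in> Y"
  using T_props[of x] cd(9) unfolding T_def by auto

lemma ftil_meas: "(\<lambda>x. indicator X x * f x) \<in> borel_measurable borel"
  using borel_measurable_continuous_on_indicator[OF borel_open[OF cd(1)] f_cont] by simp

lemma cX_meas: "y \<in> Y \<Longrightarrow> (\<lambda>x. indicator X x * c x y) \<in> borel_measurable borel"
  using borel_measurable_continuous_on_indicator[OF borel_open[OF cd(1)] cost_cont_x[OF ca]] by simp

lemma cY_meas: "x \<in> X \<Longrightarrow> (\<lambda>y. indicator Y y * c x y) \<in> borel_measurable borel"
  using borel_measurable_continuous_on_indicator[OF borel_open[OF cd(2)] cost_cont_y[OF ca]] by simp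

lemma phit_meas: "(\<lambda>y. indicator Y y * \<phi> y) \<in> borel_measurable borel"
  using borel_measurable_continuous_on_indicator[OF borel_open[OF cd(2)] phic] by simp

lemma closed_char:
  assumes F: "closed F" and FY: "F \<inter> Y \<noteq> {}"
  obtains D where "countable D" "D \<subseteq> F \<inter> Y" "D \<noteq> {}"
    "\<And>x. x \<in> X \<Longrightarrow> (\<exists>y\<in>F \<inter> Y. f x = c x y + \<phi> y) \<longleftrightarrow> (INF d\<in>D. c x d + \<phi> d) \<le> f x"
proof -
  obtain D where D: "countable D" "D \<subseteq> F \<inter> Y"
    "\<And>y U. y \<in> F \<inter> Y \<Longrightarrow> open U \<Longrightarrow> y \<in> U \<Longrightarrow> \<exists>d\<in>D. d \<in> U"
    using countable_dense_subset by blast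
  have Dne: "D \<noteq> {}" using D(3)[of _ UNIV] FY by auto
  have bddD: "x \<in> X \<Longrightarrow> bdd_below ((\<lambda>d. c x d + \<phi> d) ` D)" for x
    using hbdd[of x] D(2) by (meson bdd_below_mono image_mono le_inf_iff)
  show ?thesis
  proof (rule that[OF D(1,2) Dne])
    fix x assume x: "x \<in> X"
    show "(\<exists>y\<in>F \<inter> Y. f x = c x y + \<phi> y) \<longleftrightarrow> (INF d\<in>D. c x d + \<phi> d) \<le> f x"
    proof
      assume "\<exists>y\<in>F \<inter> Y. f x = c x y + \<phi> y"
      then obtain y where y: "y \<in> F \<inter> Y" "f x = c x y + \<phi> y" by blast
      show "(INF d\<in>D. c x d + \<phi> d) \<le> f x"
      proof (rule ccontr)
        assume nt: "\<not> (INF d\<in>D. c x d + \<phi> d) \<le> f x"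
        define \<epsilon> where "\<epsilon> = (INF d\<in>D. c x d + \<phi> d) - f x"
        have \<epsilon>: "\<epsilon> > 0" using nt unfolding \<epsilon>_def by simp
        obtain \<delta> where \<delta>: "\<delta> > 0" "\<And>y'. y' \<in> Y \<Longrightarrow> dist y' y < \<delta> \<Longrightarrow> dist (c x y' + \<phi> y') (c x y + \<phi> y) < \<epsilon>"
          using val_cont[OF x] y(1) \<epsilon> unfolding continuous_on_iff by blast
        obtain d where d: "d \<in> D" "d \<in> ball y \<delta>" using D(3)[OF y(1) open_ball centre_in_ball[THEN iffD2, OF \<delta>(1)]] by blast
        have "c x d + \<phi> d < c x y + \<phi> y + \<epsilon>"
          using \<delta>(2)[of d] d D(2) by (auto simp: dist_real_def dist_commute)
        moreover have "(INF d\<in>D. c x d + \<phi> d) \<le> c x d + \<phi> d" using bddD[OF x] d(1) by (rule cINF_lower)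
        ultimately show False using y(2) unfolding \<epsilon>_def by linarith
      qed
    next
      assume le: "(INF d\<in>D. c x d + \<phi> d) \<le> f x"
      show "\<exists>y\<in>F \<inter> Y. f x = c x y + \<phi> y"
      proof (rule min_on_closed[OF x F])
        fix \<epsilon> :: real assume \<epsilon>: "\<epsilon> > 0"
        have "(INF d\<in>D. c x d + \<phi> d) < f x + \<epsilon>" using le \<epsilon> by linarith
        then obtain d where "d \<in> D" "c x d + \<phi> d < f x + \<epsilon>"
          using cINF_less_iff[OF Dne bddD[OF x]] by blast
        then show "\<exists>y\<in>F \<inter> Y. c x y + \<phi> y < f x + \<epsilon>" using D(2) by blast
      qed
    qed
  qed
qed

lemma T_meas: "T \<in> borel_measurable borel"
proof (rule borel_measurableI)
  have cl: "T -` F \<in> sets borel" if F: "closed F" for F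
  proof -
    define E where "E = {x\<in>X'. Tmap Y c f x \<in> F}"
    have "T -` F = E \<union> (if y0 \<in> F then UNIV - X' else {})"
      unfolding E_def T_def by (auto split: if_splits)
    moreover have "E \<in> sets borel"
    proof (cases "F \<inter> Y = {}")
      case True
      then have "E = {}" unfolding E_def using T_props T_def by auto
      then show ?thesis by simp
    next
      case False
      obtain D where D: "countable D" "D \<subseteq> F \<inter> Y" "D \<noteq> {}"
        "\<And>x. x \<in> X \<Longrightarrow> (\<exists>y\<in>F \<inter> Y. f x = c x y + \<phi> y) \<longleftrightarrow> (INF d\<in>D. c x d + \<phi> d) \<le> f x"
        using closed_char[OF F False] by blast
      have "E = X' \<inter> {x. (INF d\<in>D. indicator X x * c x d + \<phi> d) \<le> indicator X x * f x}"
      proof -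
        have "x \<in> E \<longleftrightarrow> (INF d\<in>D. indicator X x * c x d + \<phi> d) \<le> indicator X x * f x" if x: "x \<in> X'" for x
        proof -
          have xX: "x \<in> X" using x unfolding X'_def by auto
          have "x \<in> E \<longleftrightarrow> (\<exists>y\<in>F \<inter> Y. f x = c x y + \<phi> y)"
          proof
            assume "x \<in> E"
            then show "\<exists>y\<in>F \<inter> Y. f x = c x y + \<phi> y" using T_props[OF x] x unfolding E_def T_def by auto
          next
            assume "\<exists>y\<in>F \<inter> Y. f x = c x y + \<phi> y"
            then obtain y where y: "y \<in> F \<inter> Y" "f x = c x y + \<phi> y" by blast
            have "Tmap Y c f x = y" using Tmap_min[OF xX _ _ y(2)] N0(2) x y(1) unfolding X'_def by auto
            then show "x \<in> E" unfolding E_def using x y by auto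
          qed
          then show ?thesis using D(4)[OF xX] xX by simp
        qed
        moreover have "E \<subseteq> X'" unfolding E_def by auto
        ultimately show ?thesis by blast
      qed
      moreover have "(\<lambda>x. INF d\<in>D. indicator X x * c x d + \<phi> d) \<in> borel_measurable borel"
        using D(1,2) cX_meas by (intro borel_measurable_cINF_real) auto
      moreover have "{x \<in> space borel. (INF d\<in>D. indicator X x * c x d + \<phi> d) \<le> indicator X x * f x} \<in> sets borel"
        by (rule borel_measurable_le) (fact, fact ftil_meas)
      ultimately show ?thesis using X'_sets by auto
    qed
    moreover have "UNIV - X' \<in> sets borel" using X'_sets by auto
    ultimately show ?thesis by auto
  qed
  fix S :: "'a set" assume "open S"
  then have "T -` S = UNIV - T -` (- S)" by auto
  moreover have "T -` (- S) \<in> sets borel" using cl[of "- S"] \<open>open S\<close> by auto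
  ultimately show "T -` S \<inter> space borel \<in> sets borel" by (metis Diff_UNIV sets.compl_sets space_borel inf_top.right_neutral)
qed

end

lemma enn_cancel:
  assumes "0 \<le> b" "b \<le> a" "ennreal a \<le> C + ennreal b"
  shows "ennreal (a - b) \<le> C"
proof (cases C)
  case (real r)
  then have "ennreal a \<le> ennreal (r + b)" using assms ennreal_plus[of r b] by simp
  then have "a \<le> r + b" using assms real by (subst (asm) ennreal_le_iff) auto
  then show ?thesis using real by (simp add: ennreal_leI)
qed simp

locale ots_mu = ots +
  fixes \<mu> :: "'a measure"
  assumes mu: "\<mu> \<in> Pcost_AC_X X c y0"
begin

lemma mu_prob: "prob_space \<mu>" and mu_sets: "sets \<mu> = sets borel"
  and mu_X: "emeasure \<mu> (space \<mu> - X) = 0" and mu_int: "set_integrable \<mu> X (\<lambda>x. c x y0)"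
  and mu_ac: "null_sets lborel \<subseteq> null_sets \<mu>"
  using mu unfolding Pcost_AC_X_def Pcost_X_def prob_on_def absolutely_continuous_def by auto

lemma mu_space: "space \<mu> = UNIV"
  using sets_eq_imp_space_eq[OF mu_sets] by simp

interpretation P: prob_space \<mu> by (rule mu_prob)

lemma meas_mu: "g \<in> borel_measurable borel \<Longrightarrow> g \<in> borel_measurable \<mu>"
  using measurable_cong_sets[OF mu_sets refl] by blast

lemma AE_X: "AE x in \<mu>. x \<in> X"
proof -
  have "UNIV - X \<in> null_sets \<mu>" using mu_X mu_space mu_sets cd(1) by (auto simp: null_sets_def)
  then show ?thesis by (rule AE_I') (auto simp: mu_space)
qed

lemma AE_X': "AE x in \<mu>. x \<in> X'"
proof -
  have "AE x in \<mu>. x \<notin> N0" using mu_ac N0(1) by (intro AE_not_in) auto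
  then show ?thesis using AE_X unfolding X'_def by eventually_elim auto
qed

lemma int_cy0: "integrable \<mu> (\<lambda>x. indicator X x * c x y0)"
  using mu_int by (simp add: set_integrable_def)

lemma int_f: "integrable \<mu> (\<lambda>x. indicator X x * f x)"
proof (rule Bochner_Integration.integrable_bound[where f="\<lambda>x. indicator X x * c x y0 + M\<phi>"])
  show "integrable \<mu> (\<lambda>x. indicator X x * c x y0 + M\<phi>)" using int_cy0 by simp
  show "(\<lambda>x. indicator X x * f x) \<in> borel_measurable \<mu>" using ftil_meas by (rule meas_mu)
  show "AE x in \<mu>. norm (indicator X x * f x) \<le> norm (indicator X x * c x y0 + M\<phi>)"
  proof (rule AE_I2)
    fix x
    show "norm (indicator X x * f x) \<le> norm (indicator X x * c x y0 + M\<phi>)"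
    proof (cases "x \<in> X")
      case True
      then show ?thesis using f_ge[OF True] f_le0[OF True] cd(3)[OF True cd(9)] Mphi by auto
    qed (use Mphi in auto)
  qed
qed

lemma phiT_meas: "(\<lambda>x. \<phi> (T x)) \<in> borel_measurable borel"
proof -
  have "(\<lambda>x. indicator Y (T x) * \<phi> (T x)) \<in> borel_measurable borel"
    using measurable_compose[OF T_meas phit_meas] by simp
  then show ?thesis using T_Y by simp
qed

lemma int_phiT: "integrable \<mu> (\<lambda>x. \<phi> (T x))"
proof (rule Bochner_Integration.integrable_bound[where f="\<lambda>x. M\<phi>"])
  show "integrable \<mu> (\<lambda>x. M\<phi>)" by simp
  show "(\<lambda>x. \<phi> (T x)) \<in> borel_measurable \<mu>" using phiT_meas by (rule meas_mu)
  show "AE x in \<mu>. norm (\<phi> (T x)) \<le> norm M\<phi>" using phiB[OF T_Y] Mphi by auto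
qed


lemma fst_meas: "fst \<in> borel_measurable (borel :: ('a \<times> 'a) measure)"
  by (intro borel_measurable_continuous_onI continuous_intros)
lemma snd_meas: "snd \<in> borel_measurable (borel :: ('a \<times> 'a) measure)"
  by (intro borel_measurable_continuous_onI continuous_intros)

lemma cost_meas: "(\<lambda>p. indicator (X \<times> Y) p * ennreal (c (fst p) (snd p))) \<in> borel_measurable (borel :: ('a \<times> 'a) measure)"
proof -
  have o: "open (X \<times> Y)" using cd(1,2) by (simp add: open_Times)
  have "(\<lambda>p. indicator (X \<times> Y) p * (\<lambda>(x,y). c x y) p) \<in> borel_measurable borel"
    using borel_measurable_continuous_on_indicator[OF borel_open[OF o] cost_continuous[OF ca]] by simp
  then have "(\<lambda>p. ennreal (indicator (X \<times> Y) p * (\<lambda>(x,y). c x y) p)) \<in> borel_measurable borel"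
    by measurable
  moreover have "ennreal (indicator (X \<times> Y) p * (\<lambda>(x,y). c x y) p) = indicator (X \<times> Y) p * ennreal (c (fst p) (snd p))" for p
    by (cases p) (auto simp: indicator_def)
  ultimately show ?thesis by simp
qed

lemma lower_bound:
  assumes nu: "\<nu> \<in> Pcost_Y Y c x0"
  shows "ereal (LINT x:X|\<mu>. f x) \<le> ereal (LINT y:Y|\<nu>. \<phi> y) + enn2ereal (Kc X Y c \<mu> \<nu>)"
proof -
  have nu_prob: "prob_space \<nu>" and nu_sets: "sets \<nu> = sets borel" and nu_Y: "emeasure \<nu> (space \<nu> - Y) = 0"
    using nu unfolding Pcost_Y_def prob_on_def by auto
  have nu_space: "space \<nu> = UNIV" using sets_eq_imp_space_eq[OF nu_sets] by simp
  interpret N: prob_space \<nu> by (rule nu_prob)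
  have int_phi: "integrable \<nu> (\<lambda>y. indicator Y y * \<phi> y)"
  proof (rule Bochner_Integration.integrable_bound[where f="\<lambda>x. M\<phi>"])
    show "integrable \<nu> (\<lambda>x. M\<phi>)" by simp
    show "(\<lambda>y. indicator Y y * \<phi> y) \<in> borel_measurable \<nu>"
      using phit_meas measurable_cong_sets[OF nu_sets refl] by blast
    show "AE x in \<nu>. norm (indicator Y x * \<phi> x) \<le> norm M\<phi>"
      using phiB Mphi by (intro AE_I2) (auto simp: indicator_def)
  qed
  define a where "a = (\<integral>x. indicator X x * f x \<partial>\<mu>) + M\<phi>"
  define b where "b = (\<integral>y. indicator Y y * \<phi> y \<partial>\<nu>) + M\<phi>"
  define g where "g x = indicator X x * f x + M\<phi>" for x
  define h where "h y = indicator Y y * \<phi> y + M\<phi>" for y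
  have g0: "0 \<le> g x" for x using f_ge[of x] Mphi unfolding g_def by (auto simp: indicator_def)
  have h0: "0 \<le> h y" for y using phiB[of y] Mphi unfolding h_def by (auto simp: indicator_def abs_le_iff)
  have ga: "(\<integral>\<^sup>+ x. ennreal (g x) \<partial>\<mu>) = ennreal a"
  proof -
    have "integrable \<mu> g" unfolding g_def using int_f by simp
    then have "(\<integral>\<^sup>+ x. ennreal (g x) \<partial>\<mu>) = ennreal (\<integral>x. g x \<partial>\<mu>)"
      using g0 by (intro nn_integral_eq_integral) auto
    also have "(\<integral>x. g x \<partial>\<mu>) = a" unfolding g_def a_def using int_f P.prob_space by simp
    finally show ?thesis .
  qed
  have hbint: "(\<integral>y. h y \<partial>\<nu>) = b" unfolding h_def b_def using int_phi N.prob_space by simp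
  have hb: "(\<integral>\<^sup>+ y. ennreal (h y) \<partial>\<nu>) = ennreal b"
  proof -
    have "integrable \<nu> h" unfolding h_def using int_phi by simp
    then have "(\<integral>\<^sup>+ y. ennreal (h y) \<partial>\<nu>) = ennreal (\<integral>y. h y \<partial>\<nu>)"
      using h0 by (intro nn_integral_eq_integral) auto
    also have "(\<integral>y. h y \<partial>\<nu>) = b" unfolding h_def b_def using int_phi N.prob_space by simp
    finally show ?thesis .
  qed
  have gm: "g \<in> borel_measurable borel" unfolding g_def using ftil_meas by measurable
  have hm: "h \<in> borel_measurable borel" unfolding h_def using phit_meas by measurable
  have key: "ennreal a \<le> (\<integral>\<^sup>+ p. indicator (X \<times> Y) p * ennreal (c (fst p) (snd p)) \<partial>\<pi>) + ennreal b"
    if pi: "\<pi> \<in> couplings \<mu> \<nu>" for \<pi>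
  proof -
    have pi_sets: "sets \<pi> = sets (borel :: ('a \<times> 'a) measure)" and m1: "distr \<pi> borel fst = \<mu>"
      and m2: "distr \<pi> borel snd = \<nu>" using pi unfolding couplings_def by auto
    have fstm: "fst \<in> measurable \<pi> borel" using fst_meas measurable_cong_sets[OF pi_sets refl] by blast
    have sndm: "snd \<in> measurable \<pi> borel" using snd_meas measurable_cong_sets[OF pi_sets refl] by blast
    have costm: "(\<lambda>p. indicator (X \<times> Y) p * ennreal (c (fst p) (snd p))) \<in> borel_measurable \<pi>"
      using cost_meas measurable_cong_sets[OF pi_sets refl] by blast
    have e1: "(\<integral>\<^sup>+ x. ennreal (g x) \<partial>\<mu>) = (\<integral>\<^sup>+ p. ennreal (g (fst p)) \<partial>\<pi>)"
      unfolding m1[symmetric] using gm by (intro nn_integral_distr fstm) measurable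
    have e2: "(\<integral>\<^sup>+ y. ennreal (h y) \<partial>\<nu>) = (\<integral>\<^sup>+ p. ennreal (h (snd p)) \<partial>\<pi>)"
      unfolding m2[symmetric] using hm by (intro nn_integral_distr sndm) measurable
    have AE1: "AE p in \<pi>. fst p \<in> X"
    proof -
      have "emeasure \<pi> (fst -` (UNIV - X) \<inter> space \<pi>) = emeasure (distr \<pi> borel fst) (UNIV - X)"
        using cd(1) by (intro emeasure_distr[symmetric] fstm) auto
      also have "\<dots> = 0" using m1 mu_X mu_space by simp
      finally have "fst -` (UNIV - X) \<inter> space \<pi> \<in> null_sets \<pi>"
        using cd(1) fstm by (auto simp: null_sets_def)
      then show ?thesis by (rule AE_I') auto
    qed
    have AE2: "AE p in \<pi>. snd p \<in> Y"
    proof -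
      have "emeasure \<pi> (snd -` (UNIV - Y) \<inter> space \<pi>) = emeasure (distr \<pi> borel snd) (UNIV - Y)"
        using cd(2) by (intro emeasure_distr[symmetric] sndm) auto
      also have "\<dots> = 0" using m2 nu_Y nu_space by simp
      finally have "snd -` (UNIV - Y) \<inter> space \<pi> \<in> null_sets \<pi>"
        using cd(2) sndm by (auto simp: null_sets_def)
      then show ?thesis by (rule AE_I') auto
    qed
    have "ennreal a = (\<integral>\<^sup>+ p. ennreal (g (fst p)) \<partial>\<pi>)" using ga e1 by simp
    also have "(\<integral>\<^sup>+ p. ennreal (g (fst p)) \<partial>\<pi>) \<le> (\<integral>\<^sup>+ p. indicator (X \<times> Y) p * ennreal (c (fst p) (snd p)) + ennreal (h (snd p)) \<partial>\<pi>)"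
    proof (rule nn_integral_mono_AE)
      show "AE p in \<pi>. ennreal (g (fst p)) \<le> indicator (X \<times> Y) p * ennreal (c (fst p) (snd p)) + ennreal (h (snd p))"
        using AE1 AE2
      proof eventually_elim
        case (elim p)
        obtain x y where p: "p = (x, y)" by (cases p)
        have xX: "x \<in> X" and yY: "y \<in> Y" using elim p by auto
        have "g x \<le> c x y + h y" using f_le[OF xX yY] xX yY unfolding g_def h_def by simp
        then have "ennreal (g x) \<le> ennreal (c x y + h y)" by (rule ennreal_leI)
        also have "\<dots> = ennreal (c x y) + ennreal (h y)" using cd(3)[OF xX yY] h0 by (rule ennreal_plus)
        finally show ?case using xX yY p by simp
      qed
    qed
    also have "\<dots> = (\<integral>\<^sup>+ p. indicator (X \<times> Y) p * ennreal (c (fst p) (snd p)) \<partial>\<pi>) + (\<integral>\<^sup>+ p. ennreal (h (snd p)) \<partial>\<pi>)"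
    proof (rule nn_integral_add[OF costm])
      have "(\<lambda>y. ennreal (h y)) \<in> borel_measurable borel" using hm by measurable
      from measurable_compose[OF sndm this] show "(\<lambda>p. ennreal (h (snd p))) \<in> borel_measurable \<pi>" .
    qed
    also have "\<dots> = (\<integral>\<^sup>+ p. indicator (X \<times> Y) p * ennreal (c (fst p) (snd p)) \<partial>\<pi>) + ennreal b"
      using e2 hb by simp
    finally show ?thesis .
  qed
  have Kab: "ereal (a - b) \<le> enn2ereal (Kc X Y c \<mu> \<nu>)"
  proof (cases "b \<le> a")
    case True
    have b0: "0 \<le> b"
      using Bochner_Integration.integral_nonneg[of \<nu> h] h0 hbint by simp
    have "ennreal (a - b) \<le> Kc X Y c \<mu> \<nu>"
      unfolding Kc_def by (intro INF_greatest enn_cancel[OF b0 True] key)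
    then have "enn2ereal (ennreal (a - b)) \<le> enn2ereal (Kc X Y c \<mu> \<nu>)"
      by (simp add: less_eq_ennreal.rep_eq)
    then show ?thesis using True by simp
  next
    case False
    then have "ereal (a - b) \<le> 0" by simp
    then show ?thesis using enn2ereal_nonneg order_trans by blast
  qed
  have "(LINT x:X|\<mu>. f x) = a - M\<phi>" unfolding a_def set_lebesgue_integral_def by simp
  moreover have "(LINT y:Y|\<nu>. \<phi> y) = b - M\<phi>" unfolding b_def set_lebesgue_integral_def by simp
  ultimately have "ereal (LINT x:X|\<mu>. f x) = ereal (LINT y:Y|\<nu>. \<phi> y) + ereal (a - b)" by simp
  also have "\<dots> \<le> ereal (LINT y:Y|\<nu>. \<phi> y) + enn2ereal (Kc X Y c \<mu> \<nu>)"
    using Kab by (rule add_left_mono)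
  finally show ?thesis .
qed


end

context ots_mu begin

interpretation P: prob_space \<mu> by (rule mu_prob)
definition "nub = distr \<mu> borel T"
definition "pib = distr \<mu> borel (\<lambda>x. (x, T x))"

lemma Tmu: "T \<in> measurable \<mu> borel" using meas_mu[OF T_meas] .

lemma pair_meas: "(\<lambda>x. (x, T x)) \<in> measurable \<mu> (borel :: ('a \<times> 'a) measure)"
  using Tmu by (intro borel_measurable_Pair) (auto intro: meas_mu)

lemma int_ind_phiT: "integrable \<mu> (\<lambda>x. indicator X x * \<phi> (T x))"
proof -
  have "integrable \<mu> (\<lambda>x. indicator X x *\<^sub>R \<phi> (T x))"
    by (rule integrable_mult_indicator) (use cd(1) mu_sets int_phiT in auto)
  then show ?thesis by simp
qed

lemma AE_phiT: "AE x in \<mu>. indicator X x * \<phi> (T x) = \<phi> (T x)"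
  using AE_X by eventually_elim auto

lemma nub_Pcost: "nub \<in> Pcost_Y Y c x0"
  unfolding Pcost_Y_def prob_on_def
proof (intro CollectI conjI)
  show "prob_space nub" unfolding nub_def by (rule P.prob_space_distr[OF Tmu])
  show "sets nub = sets borel" unfolding nub_def by simp
  have sp: "space nub = UNIV" unfolding nub_def by simp
  have "emeasure nub (UNIV - Y) = emeasure \<mu> (T -` (UNIV - Y) \<inter> space \<mu>)"
    unfolding nub_def by (rule emeasure_distr[OF Tmu]) (use cd(2) in auto)
  then have "emeasure nub (space nub - Y) = emeasure \<mu> (T -` (UNIV - Y) \<inter> space \<mu>)" using sp by simp
  also have "T -` (UNIV - Y) \<inter> space \<mu> = {}" using T_Y by auto
  finally show "emeasure nub (space nub - Y) = 0" by simp
  obtain B where B: "B > 0" "\<And>x y. x \<in> X \<Longrightarrow> y \<in> Y \<Longrightarrow> (1 - 1/2) * c x0 y - B * c x y0 \<le> c x y"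
    using cd(10)[of "1/2"] by auto
  have "integrable \<mu> (\<lambda>x. indicator Y (T x) * c x0 (T x))"
  proof (rule Bochner_Integration.integrable_bound[where f="\<lambda>x. 2 * (1 + B) * (indicator X x * c x y0) + 4 * M\<phi>"])
    show "integrable \<mu> (\<lambda>x. 2 * (1 + B) * (indicator X x * c x y0) + 4 * M\<phi>)" using int_cy0 by simp
    show "(\<lambda>x. indicator Y (T x) * c x0 (T x)) \<in> borel_measurable \<mu>"
      using measurable_compose[OF Tmu cY_meas[OF cd(8)]] .
    show "AE x in \<mu>. norm (indicator Y (T x) * c x0 (T x)) \<le> norm (2 * (1 + B) * (indicator X x * c x y0) + 4 * M\<phi>)"
      using AE_X'
    proof eventually_elim
      case (elim x)
      have xX: "x \<in> X" using elim unfolding X'_def by auto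
      have TY: "T x \<in> Y" by (rule T_Y)
      have m: "f x = c x (T x) + \<phi> (T x)" using T_props[OF elim] by auto
      have c1: "c x0 (T x) \<le> 2 * (c x (T x) + B * c x y0)" using B(2)[OF xX TY] by simp
      have c2: "c x (T x) \<le> c x y0 + 2 * M\<phi>"
        using m f_le0[OF xX] phiB[OF TY] by (auto simp: abs_le_iff)
      have c0: "0 \<le> c x0 (T x)" "0 \<le> c x y0" using cd(3)[OF cd(8) TY] cd(3)[OF xX cd(9)] by auto
      have "c x0 (T x) \<le> 2 * (1 + B) * c x y0 + 4 * M\<phi>" using c1 c2 by (simp add: algebra_simps)
      moreover have "norm (indicator Y (T x) * c x0 (T x)) = c x0 (T x)" using TY c0 by simp
      moreover have "norm (2 * (1 + B) * (indicator X x * c x y0) + 4 * M\<phi>) = 2 * (1 + B) * c x y0 + 4 * M\<phi>"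
        using xX c0 B(1) Mphi by simp
      ultimately show ?case by simp
    qed
  qed
  then show "set_integrable nub Y (\<lambda>y. c x0 y)"
    unfolding set_integrable_def nub_def
    by (subst integrable_distr_eq[OF Tmu]) (use cY_meas[OF cd(8)] in auto)
qed

lemma pib_coupling: "pib \<in> couplings \<mu> nub"
  unfolding couplings_def
proof (intro CollectI conjI)
  show "prob_space pib" unfolding pib_def by (rule P.prob_space_distr[OF pair_meas])
  show "sets pib = sets (borel :: ('a \<times> 'a) measure)" unfolding pib_def by simp
  have "distr pib borel fst = distr \<mu> borel (fst \<circ> (\<lambda>x. (x, T x)))"
    unfolding pib_def by (intro distr_distr fst_meas pair_meas)
  also have "\<dots> = distr \<mu> borel (\<lambda>x. x)" by (simp add: o_def)
  also have "\<dots> = \<mu>" by (rule distr_id2) (simp add: mu_sets)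
  finally show "distr pib borel fst = \<mu>" .
  have "distr pib borel snd = distr \<mu> borel (snd \<circ> (\<lambda>x. (x, T x)))"
    unfolding pib_def by (intro distr_distr snd_meas pair_meas)
  also have "\<dots> = nub" by (simp add: o_def nub_def)
  finally show "distr pib borel snd = nub" .
qed

lemma cost_pib: "(\<integral>\<^sup>+ p. indicator (X \<times> Y) p * ennreal (c (fst p) (snd p)) \<partial>pib)
    = ennreal (\<integral>x. indicator X x * f x - indicator X x * \<phi> (T x) \<partial>\<mu>)"
proof -
  have "(\<integral>\<^sup>+ p. indicator (X \<times> Y) p * ennreal (c (fst p) (snd p)) \<partial>pib)
      = (\<integral>\<^sup>+ x. indicator (X \<times> Y) (x, T x) * ennreal (c x (T x)) \<partial>\<mu>)"
    unfolding pib_def by (subst nn_integral_distr[OF pair_meas]) (use cost_meas in auto)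
  also have "\<dots> = (\<integral>\<^sup>+ x. ennreal (indicator X x * f x - indicator X x * \<phi> (T x)) \<partial>\<mu>)"
  proof (rule nn_integral_cong_AE)
    show "AE x in \<mu>. indicator (X \<times> Y) (x, T x) * ennreal (c x (T x)) = ennreal (indicator X x * f x - indicator X x * \<phi> (T x))"
      using AE_X'
    proof eventually_elim
      case (elim x)
      have xX: "x \<in> X" using elim unfolding X'_def by auto
      have m: "f x = c x (T x) + \<phi> (T x)" using T_props[OF elim] by auto
      then show ?case using xX T_Y[of x] by simp
    qed
  qed
  also have "\<dots> = ennreal (\<integral>x. indicator X x * f x - indicator X x * \<phi> (T x) \<partial>\<mu>)"
  proof (rule nn_integral_eq_integral)
    show "integrable \<mu> (\<lambda>x. indicator X x * f x - indicator X x * \<phi> (T x))"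
      using int_f int_ind_phiT by simp
    show "AE x in \<mu>. 0 \<le> indicator X x * f x - indicator X x * \<phi> (T x)"
      using AE_X'
    proof eventually_elim
      case (elim x)
      have xX: "x \<in> X" using elim unfolding X'_def by auto
      have m: "f x = c x (T x) + \<phi> (T x)" using T_props[OF elim] by auto
      then show ?case using xX cd(3)[OF xX T_Y] by simp
    qed
  qed
  finally show ?thesis .
qed

lemma attain:
  "ereal (LINT y:Y|nub. \<phi> y) + enn2ereal (Kc X Y c \<mu> nub) = ereal (LINT x:X|\<mu>. f x)"
proof (rule antisym)
  show "ereal (LINT x:X|\<mu>. f x) \<le> ereal (LINT y:Y|nub. \<phi> y) + enn2ereal (Kc X Y c \<mu> nub)"
    by (rule lower_bound[OF nub_Pcost])
  define I where "I = (\<integral>x. indicator X x * f x - indicator X x * \<phi> (T x) \<partial>\<mu>)"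
  have I0: "0 \<le> I" unfolding I_def
  proof (rule integral_nonneg_AE)
    show "AE x in \<mu>. 0 \<le> indicator X x * f x - indicator X x * \<phi> (T x)"
      using AE_X'
    proof eventually_elim
      case (elim x)
      have xX: "x \<in> X" using elim unfolding X'_def by auto
      have m: "f x = c x (T x) + \<phi> (T x)" using T_props[OF elim] by auto
      then show ?case using xX cd(3)[OF xX T_Y] by simp
    qed
  qed
  have "Kc X Y c \<mu> nub \<le> ennreal I"
    unfolding Kc_def I_def cost_pib[symmetric] using pib_coupling by (rule INF_lower)
  then have "enn2ereal (Kc X Y c \<mu> nub) \<le> enn2ereal (ennreal I)"
    by (simp only: less_eq_ennreal.rep_eq)
  then have K: "enn2ereal (Kc X Y c \<mu> nub) \<le> ereal I" using I0 by simp
  have L: "(LINT y:Y|nub. \<phi> y) = (\<integral>x. indicator X x * \<phi> (T x) \<partial>\<mu>)"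
  proof -
    have "(LINT y:Y|nub. \<phi> y) = (\<integral>y. indicator Y y * \<phi> y \<partial>nub)"
      unfolding set_lebesgue_integral_def by simp
    also have "\<dots> = (\<integral>x. indicator Y (T x) * \<phi> (T x) \<partial>\<mu>)"
      unfolding nub_def by (rule integral_distr[OF Tmu phit_meas])
    also have "\<dots> = (\<integral>x. \<phi> (T x) \<partial>\<mu>)" using T_Y by simp
    also have "\<dots> = (\<integral>x. indicator X x * \<phi> (T x) \<partial>\<mu>)"
    proof (rule integral_cong_AE)
      show "(\<lambda>x. \<phi> (T x)) \<in> borel_measurable \<mu>" by (rule meas_mu[OF phiT_meas])
      have "(\<lambda>x. indicator X x * \<phi> (T x)) \<in> borel_measurable borel"
        using phiT_meas borel_open[OF cd(1)] by measurable
      then show "(\<lambda>x. indicator X x * \<phi> (T x)) \<in> borel_measurable \<mu>" by (rule meas_mu)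
      show "AE x in \<mu>. \<phi> (T x) = indicator X x * \<phi> (T x)" using AE_phiT by eventually_elim simp
    qed
    finally show ?thesis .
  qed
  have F: "(LINT x:X|\<mu>. f x) = (\<integral>x. indicator X x * \<phi> (T x) \<partial>\<mu>) + I"
    unfolding I_def set_lebesgue_integral_def using int_f int_ind_phiT by simp
  show "ereal (LINT y:Y|nub. \<phi> y) + enn2ereal (Kc X Y c \<mu> nub) \<le> ereal (LINT x:X|\<mu>. f x)"
  proof -
    have "ereal (\<integral>x. indicator X x * \<phi> (T x) \<partial>\<mu>) + enn2ereal (Kc X Y c \<mu> nub)
        \<le> ereal (\<integral>x. indicator X x * \<phi> (T x) \<partial>\<mu>) + ereal I" by (rule add_left_mono[OF K])
    then show ?thesis unfolding L F by simp
  qed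
qed

end

theorem mainTheorem7:
  fixes X Y :: "'a::euclidean_space set" and c :: "'a \<Rightarrow> 'a \<Rightarrow> real"
    and x0 y0 :: 'a and \<mu> :: "'a measure" and \<phi> :: "'a \<Rightarrow> real"
  assumes "cost_assms X Y c x0 y0"
    and "\<mu> \<in> Pcost_AC_X X c y0"
    and "continuous_on Y \<phi>" and "bounded (\<phi> ` Y)"
  shows "((INF \<nu>\<in>Pcost_Y Y c x0. ereal (LINT y:Y|\<nu>. \<phi> y) + enn2ereal (Kc X Y c \<mu> \<nu>))
           = ereal (LINT x:X|\<mu>. ctrans_Y Y c (\<lambda>y. - \<phi> y) x)) \<and>
         (AE x in \<mu>. ctrans_Y Y c (\<lambda>y. - \<phi> y) differentiable (at x)) \<and>
         (\<exists>T. T \<in> borel_measurable \<mu> \<and>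
              (AE x in \<mu>. T x = Tmap Y c (ctrans_Y Y c (\<lambda>y. - \<phi> y)) x) \<and>
              distr \<mu> borel T \<in> Pcost_Y Y c x0 \<and>
              ereal (LINT y:Y|distr \<mu> borel T. \<phi> y) + enn2ereal (Kc X Y c \<mu> (distr \<mu> borel T))
                = ereal (LINT x:X|\<mu>. ctrans_Y Y c (\<lambda>y. - \<phi> y) x))"
proof -
  obtain M\<phi> where M: "\<And>y. y \<in> Y \<Longrightarrow> \<bar>\<phi> y\<bar> \<le> M\<phi>"
    using assms(4) unfolding bounded_iff by auto
  interpret O: ots_mu X Y c x0 y0 \<phi> M\<phi> \<mu>
    by unfold_locales (use assms M in auto)
  have fe: "ctrans_Y Y c (\<lambda>y. - \<phi> y) = O.f" unfolding O.f_def ..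
  have c1: "(INF \<nu>\<in>Pcost_Y Y c x0. ereal (LINT y:Y|\<nu>. \<phi> y) + enn2ereal (Kc X Y c \<mu> \<nu>))
           = ereal (LINT x:X|\<mu>. O.f x)"
  proof (rule antisym)
    have "(INF \<nu>\<in>Pcost_Y Y c x0. ereal (LINT y:Y|\<nu>. \<phi> y) + enn2ereal (Kc X Y c \<mu> \<nu>))
        \<le> ereal (LINT y:Y|O.nub. \<phi> y) + enn2ereal (Kc X Y c \<mu> O.nub)"
      by (rule INF_lower[OF O.nub_Pcost])
    then show "(INF \<nu>\<in>Pcost_Y Y c x0. ereal (LINT y:Y|\<nu>. \<phi> y) + enn2ereal (Kc X Y c \<mu> \<nu>))
        \<le> ereal (LINT x:X|\<mu>. O.f x)" using O.attain by simp
    show "ereal (LINT x:X|\<mu>. O.f x) \<le> (INF \<nu>\<in>Pcost_Y Y c x0. ereal (LINT y:Y|\<nu>. \<phi> y) + enn2ereal (Kc X Y c \<mu> \<nu>))"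
      by (rule INF_greatest) (rule O.lower_bound)
  qed
  have c2: "AE x in \<mu>. O.f differentiable (at x)"
    using O.AE_X' by eventually_elim (use O.N0(2) in \<open>auto simp: O.X'_def\<close>)
  have c3: "AE x in \<mu>. O.T x = Tmap Y c O.f x"
    using O.AE_X' by eventually_elim (simp add: O.T_def)
  show ?thesis unfolding fe
    using c1 c2 c3 O.Tmu O.nub_Pcost O.attain unfolding O.nub_def by blast
qed

end
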